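(* Let $A$ be a semicircular Klaus–Shaw potential. Then for $0<s<A_{\max}$, $$x_\pm(s)=\frac1\pi\int_0^s\frac{\frac{d}{dm}\Xi(\mathrm im)\,dm}{\sqrt{s^2-m^2}}\mp\frac1\pi\int_s^{A_{\max}}\frac{\frac{d}{dm}\Phi(\mathrm im)\,dm}{\sqrt{m^2-s^2}}.$$
   Context: Let $X_-<X_+$. A semicircular Klaus–Shaw potential is $A:\mathbb R\to[0,\infty)$ such that: $A$ has support $[X_-,X_+]$ and $A(x)=u(x)\sqrt{(X_+-x)(x-X_-)}$ there, where $u\ge c>0$ on $[X_-,X_+]$ and $u$ extends analytically to a complex neighborhood of $[X_-,X_+]$; $A\in L^1\cap C^2(\mathbb R)$ with a unique maximizer $x_0$; $A''(x_0)<0$. $A_{\max}:=A(x_0)$; for $0<s<A_{\max}$, $x_-(s)<x_+(s)$ are the two solutions of $A(x)=s$. Phase integral $\Phi(\mathrm is):=\int_{x_-(s)}^{x_+(s)}\sqrt{A(x)^2-s^2}\,dx$ and tail integral $\Xi(\mathrm is):=(x_+(s)+x_-(s))s+\int_{-\infty}^{x_-(s)}(\sqrt{s^2-A(x)^2}-s)\,dx-\int_{x_+(s)}^{\infty}(\sqrt{s^2-A(x)^2}-s)\,dx$, for $0<s<A_{\max}$. *)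

theory Defs
  imports "HOL-Analysis.Analysis"
begin

definition Amax :: "(real \<Rightarrow> real) \<Rightarrow> real" where
  "Amax A = Sup (range A)"

definition semicircular_KS :: "(real \<Rightarrow> real) \<Rightarrow> real \<Rightarrow> real \<Rightarrow> bool" where
  "semicircular_KS A Xm Xp \<longleftrightarrow>
     Xm < Xp \<and>
     (\<forall>x. A x \<ge> 0) \<and>
     (\<forall>x. x \<notin> {Xm..Xp} \<longrightarrow> A x = 0) \<and>
     (\<exists>u c. c > 0 \<and>
        (\<forall>x\<in>{Xm..Xp}. A x = u x * sqrt ((Xp - x) * (x - Xm)) \<and> u x \<ge> c) \<and>
        (\<exists>g U. open U \<and> complex_of_real ` {Xm..Xp} \<subseteq> U \<and> g holomorphic_on U \<and>
           (\<forall>x\<in>{Xm..Xp}. g (complex_of_real x) = complex_of_real (u x)))) \<and>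
     A absolutely_integrable_on UNIV \<and>
     continuous_on UNIV A \<and>
     (\<forall>x\<in>{Xm<..<Xp}. A differentiable (at x) \<and> deriv A differentiable (at x)) \<and>
     continuous_on {Xm<..<Xp} (deriv (deriv A)) \<and>
     (\<exists>x0. (\<forall>x. x \<noteq> x0 \<longrightarrow> A x < A x0) \<and> deriv (deriv A) x0 < 0) \<and>
     (\<forall>s. 0 < s \<and> s < Amax A \<longrightarrow> card {x. A x = s} = 2)"

definition xminus :: "(real \<Rightarrow> real) \<Rightarrow> real \<Rightarrow> real" where
  "xminus A s = Min {x. A x = s}"

definition xplus :: "(real \<Rightarrow> real) \<Rightarrow> real \<Rightarrow> real" where
  "xplus A s = Max {x. A x = s}"

text \<open>Phase integral, Phi(i s), as a function of the real parameter s.\<close>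
definition Phi :: "(real \<Rightarrow> real) \<Rightarrow> real \<Rightarrow> real" where
  "Phi A s = integral {xminus A s .. xplus A s} (\<lambda>x. sqrt ((A x)\<^sup>2 - s\<^sup>2))"

text \<open>Tail integral, Xi(i s), as a function of the real parameter s.\<close>
definition Xi :: "(real \<Rightarrow> real) \<Rightarrow> real \<Rightarrow> real" where
  "Xi A s = (xplus A s + xminus A s) * s
      + integral {..xminus A s} (\<lambda>x. sqrt (s\<^sup>2 - (A x)\<^sup>2) - s)
      - integral {xplus A s..} (\<lambda>x. sqrt (s\<^sup>2 - (A x)\<^sup>2) - s)"

end

theory Submission
  imports Defs
begin

lemma K2:
  fixes m a :: real
  assumes "0 \<le> m" "m < a"
  shows "((\<lambda>t. t / sqrt (a\<^sup>2 - t\<^sup>2)) has_integral sqrt (a\<^sup>2 - m\<^sup>2)) {m..a}"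
proof -
  have "((\<lambda>t. t / sqrt (a\<^sup>2 - t\<^sup>2)) has_integral ((\<lambda>t. - sqrt (a\<^sup>2 - t\<^sup>2)) a - (\<lambda>t. - sqrt (a\<^sup>2 - t\<^sup>2)) m)) {m..a}"
  proof (rule fundamental_theorem_of_calculus_interior)
    show "m \<le> a" using assms by simp
    show "continuous_on {m..a} (\<lambda>t. - sqrt (a\<^sup>2 - t\<^sup>2))" by (intro continuous_intros)
    fix t assume t: "t \<in> {m<..<a}"
    then have pos: "a\<^sup>2 - t\<^sup>2 > 0" using assms
      by (simp add: power2_eq_square) (smt (verit) mult_strict_mono)
    have "((\<lambda>t. - sqrt (a\<^sup>2 - t\<^sup>2)) has_real_derivative - (inverse (sqrt (a\<^sup>2 - t\<^sup>2)) / 2 * (0 - 2 * t))) (at t)"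
      by (rule derivative_eq_intros refl | use pos in simp)+
    then show "((\<lambda>t. - sqrt (a\<^sup>2 - t\<^sup>2)) has_vector_derivative t / sqrt (a\<^sup>2 - t\<^sup>2)) (at t)"
      by (simp add: has_real_derivative_iff_has_vector_derivative[symmetric] field_simps)
  qed
  then show ?thesis by simp
qed

lemma K3:
  fixes m a :: real
  assumes "0 \<le> a" "a < m"
  shows "((\<lambda>t. t / sqrt (t\<^sup>2 - a\<^sup>2)) has_integral sqrt (m\<^sup>2 - a\<^sup>2)) {a..m}"
proof -
  have "((\<lambda>t. t / sqrt (t\<^sup>2 - a\<^sup>2)) has_integral ((\<lambda>t. sqrt (t\<^sup>2 - a\<^sup>2)) m - (\<lambda>t. sqrt (t\<^sup>2 - a\<^sup>2)) a)) {a..m}"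
  proof (rule fundamental_theorem_of_calculus_interior)
    show "a \<le> m" using assms by simp
    show "continuous_on {a..m} (\<lambda>t. sqrt (t\<^sup>2 - a\<^sup>2))" by (intro continuous_intros)
    fix t assume t: "t \<in> {a<..<m}"
    then have pos: "t\<^sup>2 - a\<^sup>2 > 0" using assms
      by (simp add: power2_eq_square) (smt (verit) mult_strict_mono)
    have "((\<lambda>t. sqrt (t\<^sup>2 - a\<^sup>2)) has_real_derivative (inverse (sqrt (t\<^sup>2 - a\<^sup>2)) / 2 * (2 * t - 0))) (at t)"
      by (rule derivative_eq_intros refl | use pos in simp)+
    then show "((\<lambda>t. sqrt (t\<^sup>2 - a\<^sup>2)) has_vector_derivative t / sqrt (t\<^sup>2 - a\<^sup>2)) (at t)"
      by (simp add: has_real_derivative_iff_has_vector_derivative[symmetric] field_simps)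
  qed
  then show ?thesis by simp
qed

lemma K0:
  fixes s :: real
  assumes "0 < s"
  shows "((\<lambda>m. 1 / sqrt (s\<^sup>2 - m\<^sup>2)) has_integral pi / 2) {0..s}"
proof -
  have "((\<lambda>m. 1 / sqrt (s\<^sup>2 - m\<^sup>2)) has_integral ((\<lambda>m. arcsin (m / s)) s - (\<lambda>m. arcsin (m / s)) 0)) {0..s}"
  proof (rule fundamental_theorem_of_calculus_interior)
    show "0 \<le> s" using assms by simp
    show "continuous_on {0..s} (\<lambda>m. arcsin (m / s))"
      using assms by (intro continuous_intros) (auto simp: divide_simps)
    fix t assume t: "t \<in> {0<..<s}"
    then have lt: "\<bar>t / s\<bar> < 1" using assms by (auto simp: divide_simps)
    have pos: "s\<^sup>2 - t\<^sup>2 > 0" using t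
      by (simp add: power2_eq_square) (smt (verit) mult_strict_mono)
    have d1: "((\<lambda>m. m / s) has_real_derivative (1 / s)) (at t)"
      using assms by (auto intro!: derivative_eq_intros)
    have d2: "(arcsin has_real_derivative inverse (sqrt (1 - (t/s)\<^sup>2))) (at (t/s))"
    proof (rule DERIV_arcsin)
      show "-1 < t/s" "t/s < 1" using lt unfolding abs_less_iff by auto
    qed
    have "((\<lambda>m. arcsin (m / s)) has_real_derivative (inverse (sqrt (1 - (t/s)\<^sup>2)) * (1 / s))) (at t)"
      by (rule DERIV_chain2[OF d2 d1])
    moreover have "inverse (sqrt (1 - (t/s)\<^sup>2)) * (1 / s) = 1 / sqrt (s\<^sup>2 - t\<^sup>2)"
    proof -
      have "1 - (t/s)\<^sup>2 = (s\<^sup>2 - t\<^sup>2) / s\<^sup>2" using assms by (simp add: field_simps)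
      then have "sqrt (1 - (t/s)\<^sup>2) = sqrt (s\<^sup>2 - t\<^sup>2) / s" using assms by (simp add: real_sqrt_divide)
      then show ?thesis using assms pos by (simp add: field_simps)
    qed
    ultimately show "((\<lambda>m. arcsin (m / s)) has_vector_derivative 1 / sqrt (s\<^sup>2 - t\<^sup>2)) (at t)"
      by (simp add: has_real_derivative_iff_has_vector_derivative[symmetric])
  qed
  then show ?thesis using assms by simp
qed

lemma K1:
  fixes a b :: real
  assumes "0 \<le> a" "a < b"
  shows "((\<lambda>t. t / (sqrt (t\<^sup>2 - a\<^sup>2) * sqrt (b\<^sup>2 - t\<^sup>2))) has_integral pi / 2) {a..b}"
proof -
  define D where "D = b\<^sup>2 - a\<^sup>2"
  have D: "D > 0" using assms unfolding D_def
    by (simp add: power2_eq_square) (smt (verit) mult_strict_mono)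
  define q where "q t = (2 * t\<^sup>2 - a\<^sup>2 - b\<^sup>2) / D" for t
  have "((\<lambda>t. t / (sqrt (t\<^sup>2 - a\<^sup>2) * sqrt (b\<^sup>2 - t\<^sup>2))) has_integral ((\<lambda>t. arcsin (q t) / 2) b - (\<lambda>t. arcsin (q t) / 2) a)) {a..b}"
  proof (rule fundamental_theorem_of_calculus_interior)
    show "a \<le> b" using assms by simp
    have "q t \<in> {-1..1}" if "t \<in> {a..b}" for t
    proof -
      have "a\<^sup>2 \<le> t\<^sup>2" "t\<^sup>2 \<le> b\<^sup>2" using that assms by (auto intro: power_mono)
      then show ?thesis using D unfolding q_def D_def by (auto simp: divide_simps)
    qed
    then show "continuous_on {a..b} (\<lambda>t. arcsin (q t) / 2)"
      unfolding q_def using D by (intro continuous_intros) auto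
    fix t assume t: "t \<in> {a<..<b}"
    have p1: "t\<^sup>2 - a\<^sup>2 > 0" using t assms
      by (simp add: power2_eq_square) (smt (verit) mult_strict_mono)
    have p2: "b\<^sup>2 - t\<^sup>2 > 0" using t assms
      by (simp add: power2_eq_square) (smt (verit) mult_strict_mono)
    have key: "1 - (q t)\<^sup>2 = 4 * (t\<^sup>2 - a\<^sup>2) * (b\<^sup>2 - t\<^sup>2) / D\<^sup>2"
    proof -
      have "1 - (q t)\<^sup>2 = (D\<^sup>2 - (2 * t\<^sup>2 - a\<^sup>2 - b\<^sup>2)\<^sup>2) / D\<^sup>2"
        using D unfolding q_def by (simp add: field_simps)
      also have "D\<^sup>2 - (2 * t\<^sup>2 - a\<^sup>2 - b\<^sup>2)\<^sup>2 = 4 * (t\<^sup>2 - a\<^sup>2) * (b\<^sup>2 - t\<^sup>2)"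
        unfolding D_def by algebra
      finally show ?thesis .
    qed
    have "4 * (t\<^sup>2 - a\<^sup>2) * (b\<^sup>2 - t\<^sup>2) / D\<^sup>2 > 0" using p1 p2 D by simp
    then have "(q t)\<^sup>2 < 1" using key by linarith
    then have lt: "\<bar>q t\<bar> < 1" by (simp add: abs_square_less_1)
    have sq: "sqrt (1 - (q t)\<^sup>2) = 2 * sqrt (t\<^sup>2 - a\<^sup>2) * sqrt (b\<^sup>2 - t\<^sup>2) / D"
    proof -
      have "sqrt (4 * (t\<^sup>2 - a\<^sup>2) * (b\<^sup>2 - t\<^sup>2) / D\<^sup>2) = sqrt 4 * sqrt (t\<^sup>2 - a\<^sup>2) * sqrt (b\<^sup>2 - t\<^sup>2) / sqrt (D\<^sup>2)"
        by (simp only: real_sqrt_divide real_sqrt_mult)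
      also have "sqrt 4 = (2::real)" by (simp add: real_sqrt_eq_iff)
      also have "sqrt (D\<^sup>2) = D" using D by simp
      finally show ?thesis unfolding key .
    qed
    have d1: "(q has_real_derivative (4 * t / D)) (at t)"
      unfolding q_def using D
      by (auto intro!: derivative_eq_intros simp: field_simps)
    have d2: "(arcsin has_real_derivative inverse (sqrt (1 - (q t)\<^sup>2))) (at (q t))"
    proof (rule DERIV_arcsin)
      show "-1 < q t" "q t < 1" using lt unfolding abs_less_iff by auto
    qed
    have "((\<lambda>t. arcsin (q t)) has_real_derivative inverse (sqrt (1 - (q t)\<^sup>2)) * (4 * t / D)) (at t)"
      by (rule DERIV_chain2[OF d2 d1])
    then have "((\<lambda>t. arcsin (q t) / 2) has_real_derivative inverse (sqrt (1 - (q t)\<^sup>2)) * (4 * t / D) / 2) (at t)"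
      by (rule DERIV_cdivide)
    moreover have "inverse (sqrt (1 - (q t)\<^sup>2)) * (4 * t / D) / 2 = t / (sqrt (t\<^sup>2 - a\<^sup>2) * sqrt (b\<^sup>2 - t\<^sup>2))"
      unfolding sq using D p1 p2 by (simp add: field_simps)
    ultimately show "((\<lambda>t. arcsin (q t) / 2) has_vector_derivative t / (sqrt (t\<^sup>2 - a\<^sup>2) * sqrt (b\<^sup>2 - t\<^sup>2))) (at t)"
      by (simp add: has_real_derivative_iff_has_vector_derivative[symmetric])
  qed
  moreover have "q b = 1" "q a = -1" using D unfolding q_def D_def by (auto simp: field_simps)
  ultimately show ?thesis by simp
qed

locale incbranch =
  fixes F F' :: "real \<Rightarrow> real" and c d :: real
  assumes cd: "c < d"
    and der: "\<And>x. x \<in> {c..d} \<Longrightarrow> (F has_real_derivative F' x) (at x)"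
    and F'c: "continuous_on {c..d} F'"
    and F'pos: "\<And>x. x \<in> {c..d} \<Longrightarrow> 0 < F' x"
    and Fc: "0 < F c"
begin

definition B where "B = the_inv_into {c..d} F"

lemma Fcont: "continuous_on {c..d} F"
  using der by (intro continuous_at_imp_continuous_on) (meson DERIV_isCont atLeastAtMost_iff)

lemma Fmono: assumes "x \<in> {c..d}" "y \<in> {c..d}" "x < y" shows "F x < F y"
proof (rule DERIV_pos_imp_increasing[OF \<open>x < y\<close>])
  fix z assume "x \<le> z" "z \<le> y"
  then have "z \<in> {c..d}" using assms by auto
  then show "\<exists>D. (F has_real_derivative D) (at z) \<and> 0 < D" using der F'pos by blast
qed

lemma Fless_iff: "x \<in> {c..d} \<Longrightarrow> y \<in> {c..d} \<Longrightarrow> F x < F y \<longleftrightarrow> x < y"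
  using Fmono by (metis linorder_neq_iff order_less_asym)

lemma Fle_iff: "x \<in> {c..d} \<Longrightarrow> y \<in> {c..d} \<Longrightarrow> F x \<le> F y \<longleftrightarrow> x \<le> y"
  using Fless_iff by (meson not_less)

lemma Finj: "inj_on F {c..d}"
  by (rule inj_onI) (metis Fless_iff linorder_neq_iff)

lemma Fimage: "F ` {c..d} = {F c..F d}"
proof
  show "F ` {c..d} \<subseteq> {F c..F d}" using Fle_iff cd by auto
  show "{F c..F d} \<subseteq> F ` {c..d}"
  proof
    fix y assume "y \<in> {F c..F d}"
    then obtain x where "c \<le> x" "x \<le> d" "F x = y"
      using IVT'[of F c y d] Fcont cd by auto
    then show "y \<in> F ` {c..d}" by auto
  qed
qed

lemma Bin: "y \<in> {F c..F d} \<Longrightarrow> B y \<in> {c..d}"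
  unfolding B_def using Fimage Finj by (metis the_inv_into_into order_refl)

lemma FB: "y \<in> {F c..F d} \<Longrightarrow> F (B y) = y"
  unfolding B_def using Fimage Finj by (metis f_the_inv_into_f)

lemma BF: "x \<in> {c..d} \<Longrightarrow> B (F x) = x"
  unfolding B_def using Finj by (rule the_inv_into_f_f)

lemma Bcont: "continuous_on {F c..F d} B"
  unfolding B_def using continuous_on_inv_into[OF Fcont compact_Icc Finj] Fimage by simp

lemma Bopen: assumes "y \<in> {F c<..<F d}" shows "B y \<in> {c<..<d}"
proof -
  have y: "y \<in> {F c..F d}" using assms by auto
  have "B y \<noteq> c" "B y \<noteq> d" using FB[OF y] assms by auto
  then show ?thesis using Bin[OF y] by auto
qed

lemma Bless_iff: "y \<in> {F c..F d} \<Longrightarrow> x \<in> {c..d} \<Longrightarrow> x < B y \<longleftrightarrow> F x < y"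
  using Fless_iff[of x "B y"] Bin FB by auto

lemma Bmono: "y \<in> {F c..F d} \<Longrightarrow> z \<in> {F c..F d} \<Longrightarrow> y < z \<Longrightarrow> B y < B z"
  using Bless_iff[of z "B y"] Bin FB by auto

definition H where "H y = F' (B y)"

lemma Hcont: "continuous_on {F c..F d} H"
  unfolding H_def using Bin by (intro continuous_on_compose2[OF F'c Bcont]) auto

lemma Hpos: "y \<in> {F c..F d} \<Longrightarrow> 0 < H y"
  unfolding H_def using Bin F'pos by auto

lemma HF: "x \<in> {c..d} \<Longrightarrow> H (F x) = F' x"
  unfolding H_def using BF by simp

lemma Fpos: "x \<in> {c..d} \<Longrightarrow> 0 < F x"
  using Fle_iff[of c x] Fc by force

definition fT where
  "fT t u = t * sqrt ((F d)\<^sup>2 - t\<^sup>2) /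
     (sqrt (t\<^sup>2 + ((F d)\<^sup>2 - t\<^sup>2) * u\<^sup>2) * H (sqrt (t\<^sup>2 + ((F d)\<^sup>2 - t\<^sup>2) * u\<^sup>2)))"

lemma sq_lt: "0 \<le> a \<Longrightarrow> a < b \<Longrightarrow> (a::real)\<^sup>2 < b\<^sup>2"
  by (simp add: power_strict_mono)

lemma fT_cont: "continuous_on ({F c<..<F d} \<times> {0..1}) (\<lambda>(t, u). fT t u)"
proof -
  define Y where "Y p = sqrt ((fst p)\<^sup>2 + ((F d)\<^sup>2 - (fst p)\<^sup>2) * (snd p)\<^sup>2)" for p :: "real \<times> real"
  have Yr: "Y p \<in> {F c..F d}" if p: "p \<in> {F c<..<F d} \<times> {0..1}" for p
  proof -
    obtain t u where tu: "p = (t, u)" by (cases p)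
    with p have t: "F c < t" "t < F d" and u: "0 \<le> u" "u \<le> 1" by auto
    have t0: "0 < t" using t Fc by linarith
    have a: "t\<^sup>2 < (F d)\<^sup>2" using sq_lt t t0 by simp
    have "u\<^sup>2 \<le> 1" using u by (simp add: power_le_one)
    then have "((F d)\<^sup>2 - t\<^sup>2) * u\<^sup>2 \<le> (F d)\<^sup>2 - t\<^sup>2" using a by (simp add: mult_left_le)
    moreover have "0 \<le> ((F d)\<^sup>2 - t\<^sup>2) * u\<^sup>2" using a by simp
    ultimately have "t\<^sup>2 \<le> t\<^sup>2 + ((F d)\<^sup>2 - t\<^sup>2) * u\<^sup>2" "t\<^sup>2 + ((F d)\<^sup>2 - t\<^sup>2) * u\<^sup>2 \<le> (F d)\<^sup>2"
      by linarith+
    then have "sqrt (t\<^sup>2) \<le> Y p" "Y p \<le> sqrt ((F d)\<^sup>2)" unfolding Y_def tu fst_conv snd_conv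
      by (metis real_sqrt_le_mono)+
    moreover have "sqrt (t\<^sup>2) = t" "sqrt ((F d)\<^sup>2) = F d" using t0 t by auto
    ultimately show ?thesis using t by auto
  qed
  have Ycont: "continuous_on ({F c<..<F d} \<times> {0..1}) Y"
    unfolding Y_def by (intro continuous_intros)
  have HY: "continuous_on ({F c<..<F d} \<times> {0..1}) (\<lambda>p. H (Y p))"
    using Yr by (intro continuous_on_compose2[OF Hcont Ycont]) auto
  have Ypos: "0 < Y p" if "p \<in> {F c<..<F d} \<times> {0..1}" for p
    using Yr[OF that] Fc by auto
  have "continuous_on ({F c<..<F d} \<times> {0..1})
     (\<lambda>p. fst p * sqrt ((F d)\<^sup>2 - (fst p)\<^sup>2) / (Y p * H (Y p)))"
  proof -
    have nz: "\<forall>p\<in>{F c<..<F d} \<times> {0..1}. Y p * H (Y p) \<noteq> 0"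
      using Ypos Hpos Yr by (metis less_irrefl mult_pos_pos)
    show ?thesis by (intro continuous_intros Ycont HY nz)
  qed
  moreover have "(\<lambda>(t, u). fT t u) = (\<lambda>p. fst p * sqrt ((F d)\<^sup>2 - (fst p)\<^sup>2) / (Y p * H (Y p)))"
    by (auto simp: fT_def Y_def fun_eq_iff)
  ultimately show ?thesis by simp
qed

lemma T_cont: "continuous_on {F c<..<F d} (\<lambda>t. integral {0..1} (fT t))"
  using integral_continuous_on_param[of "{F c<..<F d}" 0 1 fT] fT_cont by simp

lemma T_has_integral:
  assumes t: "t \<in> {F c<..<F d}"
  shows "((\<lambda>x. t / sqrt ((F x)\<^sup>2 - t\<^sup>2)) has_integral integral {0..1} (fT t)) {B t..d}"
proof -
  have tc: "t \<in> {F c..F d}" using t by auto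
  have t0: "0 < t" using t Fc by auto
  define R where "R = sqrt ((F d)\<^sup>2 - t\<^sup>2)"
  have a: "t\<^sup>2 < (F d)\<^sup>2" using sq_lt t t0 by simp
  then have R: "0 < R" "R\<^sup>2 = (F d)\<^sup>2 - t\<^sup>2" unfolding R_def by auto
  define S where "S = {B t<..<d}"
  have Sx: "x \<in> {c..d}" "t < F x" "F x < F d" if "x \<in> S" for x
  proof -
    show x: "x \<in> {c..d}" using that Bopen[OF t] unfolding S_def by auto
    show "t < F x" using Bless_iff[OF tc, of x] x that FB[OF tc] Fless_iff Bin[OF tc] unfolding S_def
      by (metis greaterThanLessThan_iff)
    show "F x < F d" using Fless_iff[OF x, of d] that cd unfolding S_def by auto
  qed
  define g where "g x = sqrt ((F x)\<^sup>2 - t\<^sup>2) / R" for x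
  define g' where "g' x = F x * F' x / (sqrt ((F x)\<^sup>2 - t\<^sup>2) * R)" for x
  have W: "0 < (F x)\<^sup>2 - t\<^sup>2" if "x \<in> S" for x
    using sq_lt[of t "F x"] Sx[OF that] t0 by simp
  have gder: "(g has_real_derivative g' x) (at x within S)" if x: "x \<in> S" for x
  proof -
    have d1: "((\<lambda>x. (F x)\<^sup>2 - t\<^sup>2) has_real_derivative 2 * F x * F' x) (at x)"
      using der[OF Sx(1)[OF x]] by (auto intro!: derivative_eq_intros)
    have "((\<lambda>x. sqrt ((F x)\<^sup>2 - t\<^sup>2)) has_real_derivative inverse (sqrt ((F x)\<^sup>2 - t\<^sup>2)) / 2 * (2 * F x * F' x)) (at x)"
      by (rule DERIV_chain2[OF DERIV_real_sqrt[OF W[OF x]] d1])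
    then have "(g has_real_derivative inverse (sqrt ((F x)\<^sup>2 - t\<^sup>2)) / 2 * (2 * F x * F' x) / R) (at x)"
      unfolding g_def by (rule DERIV_cdivide)
    moreover have "inverse (sqrt ((F x)\<^sup>2 - t\<^sup>2)) / 2 * (2 * F x * F' x) / R = g' x"
      unfolding g'_def using R W[OF x] by (simp add: field_simps)
    ultimately show ?thesis by (simp add: has_field_derivative_at_within)
  qed
  have ginj: "inj_on g S"
  proof (rule inj_onI)
    fix x y assume xy: "x \<in> S" "y \<in> S" "g x = g y"
    then have "sqrt ((F x)\<^sup>2 - t\<^sup>2) = sqrt ((F y)\<^sup>2 - t\<^sup>2)" unfolding g_def using R by simp
    then have "(F x)\<^sup>2 = (F y)\<^sup>2" using W xy by simp
    then have "F x = F y" using Sx xy t0 by (smt (verit) power2_eq_iff)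
    then show "x = y" using Finj Sx xy by (meson inj_onD)
  qed
  have gimg: "g ` S = {0<..<1}"
  proof
    show "g ` S \<subseteq> {0<..<1}"
    proof
      fix u assume "u \<in> g ` S"
      then obtain x where x: "x \<in> S" "u = g x" by auto
      have "(F x)\<^sup>2 < (F d)\<^sup>2" using sq_lt Sx[OF x(1)] t0 by simp
      then have "sqrt ((F x)\<^sup>2 - t\<^sup>2) < R" unfolding R_def by simp
      then show "u \<in> {0<..<1}" using x W[OF x(1)] R by (simp add: g_def)
    qed
    show "{0<..<1} \<subseteq> g ` S"
    proof
      fix u :: real assume u: "u \<in> {0<..<1}"
      define y where "y = sqrt (t\<^sup>2 + R\<^sup>2 * u\<^sup>2)"
      have "u\<^sup>2 < 1" using u by (simp add: power_less_one_iff abs_less_iff) 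
      then have "R\<^sup>2 * u\<^sup>2 < R\<^sup>2" using R(1) by (metis mult.right_neutral mult_strict_left_mono zero_less_power)
      moreover have "0 < R\<^sup>2 * u\<^sup>2" using R(1) u by (metis greaterThanLessThan_iff mult_pos_pos zero_less_power)
      ultimately have y1: "t\<^sup>2 < y\<^sup>2" "y\<^sup>2 < (F d)\<^sup>2" unfolding y_def using R by auto
      have y0: "0 \<le> y" unfolding y_def by simp
      have Fd0: "0 \<le> F d" using t t0 by auto
      have yt: "t < y" "y < F d"
        using power2_less_imp_less[OF y1(1) y0] power2_less_imp_less[OF y1(2) Fd0] by auto
      have yr: "y \<in> {F c..F d}" using yt t by auto
      have "B y \<in> S" unfolding S_def using Bmono[OF tc yr] yt Bopen[of y] t by auto
      moreover have "g (B y) = u"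
      proof -
        have "(F (B y))\<^sup>2 - t\<^sup>2 = R\<^sup>2 * u\<^sup>2" using FB[OF yr] y_def y0 by simp
        then show ?thesis unfolding g_def using R u by (simp add: real_sqrt_mult R_def)
      qed
      ultimately show "u \<in> g ` S" by (metis image_eqI)
    qed
  qed
  have fcont: "continuous_on {0..1} (fT t)"
  proof -
    have "continuous_on {0..1} (Pair t)" by (intro continuous_intros)
    moreover have "Pair t ` {0..1} \<subseteq> {F c<..<F d} \<times> {0..1}" using t by auto
    ultimately show ?thesis
      using continuous_on_compose2[OF fT_cont, of "{0..1}" "\<lambda>u. (t, u)"] by simp
  qed
  have fabs: "fT t absolutely_integrable_on {0<..<1}"
    using absolutely_integrable_continuous_real[OF fcont] absolutely_integrable_on_Icc_iff_Ioo by blast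
  have fint: "integral {0<..<1} (fT t) = integral {0..1} (fT t)"
  proof -
    have "(fT t has_integral integral {0..1} (fT t)) {0..1}"
      by (rule integrable_integral[OF integrable_continuous_real[OF fcont]])
    then have "(fT t has_integral integral {0..1} (fT t)) {0<..<1}"
      by (simp only: has_integral_Icc_iff_Ioo)
    then show ?thesis by (rule integral_unique)
  qed
  have Sleb: "S \<in> sets lebesgue" unfolding S_def by simp
  have cov: "(\<lambda>x. \<bar>g' x\<bar> * fT t (g x)) absolutely_integrable_on S \<and>
        integral S (\<lambda>x. \<bar>g' x\<bar> * fT t (g x)) = integral {0..1} (fT t)"
    using has_absolute_integral_change_of_variables_1'[OF Sleb gder ginj, of "fT t" "integral {0..1} (fT t)"]
      gimg fabs fint by simp
  have eq: "\<bar>g' x\<bar> * fT t (g x) = t / sqrt ((F x)\<^sup>2 - t\<^sup>2)" if x: "x \<in> S" for x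
  proof -
    have x1: "x \<in> {c..d}" using Sx[OF x] by simp
    have Fx: "0 < F x" using Fpos[OF x1] .
    have gx2: "(g x)\<^sup>2 = ((F x)\<^sup>2 - t\<^sup>2) / R\<^sup>2" unfolding g_def using W[OF x] by (simp add: power_divide)
    have "t\<^sup>2 + ((F d)\<^sup>2 - t\<^sup>2) * (g x)\<^sup>2 = (F x)\<^sup>2" unfolding gx2 R(2)[symmetric] using R(1) by simp
    then have "sqrt (t\<^sup>2 + ((F d)\<^sup>2 - t\<^sup>2) * (g x)\<^sup>2) = F x" using Fx by simp
    then have "fT t (g x) = t * R / (F x * F' x)" unfolding fT_def R_def using HF[OF x1] by simp
    moreover have "\<bar>g' x\<bar> = g' x" unfolding g'_def using Fx F'pos[OF x1] W[OF x] R by simp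
    ultimately show ?thesis unfolding g'_def using Fx F'pos[OF x1] W[OF x] R by (simp add: field_simps)
  qed
  have "((\<lambda>x. \<bar>g' x\<bar> * fT t (g x)) has_integral integral {0..1} (fT t)) S"
    using cov by (metis absolutely_integrable_on_def has_integral_integrable_integral)
  then have "((\<lambda>x. t / sqrt ((F x)\<^sup>2 - t\<^sup>2)) has_integral integral {0..1} (fT t)) S"
    using eq by (metis (no_types, lifting) has_integral_cong)
  then show ?thesis unfolding S_def by (simp add: has_integral_Icc_iff_Ioo)
qed

definition fU where
  "fU t u = t * sqrt (t\<^sup>2 - (F c)\<^sup>2) /
     (sqrt (t\<^sup>2 - (t\<^sup>2 - (F c)\<^sup>2) * u\<^sup>2) * H (sqrt (t\<^sup>2 - (t\<^sup>2 - (F c)\<^sup>2) * u\<^sup>2)))"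

lemma fU_cont: "continuous_on ({F c<..<F d} \<times> {0..1}) (\<lambda>(t, u). fU t u)"
proof -
  define Y where "Y p = sqrt ((fst p)\<^sup>2 - ((fst p)\<^sup>2 - (F c)\<^sup>2) * (snd p)\<^sup>2)" for p :: "real \<times> real"
  have Yr: "Y p \<in> {F c..F d}" if p: "p \<in> {F c<..<F d} \<times> {0..1}" for p
  proof -
    obtain t u where tu: "p = (t, u)" by (cases p)
    with p have t: "F c < t" "t < F d" and u: "0 \<le> u" "u \<le> 1" by auto
    have t0: "0 < t" using t Fc by linarith
    have a: "(F c)\<^sup>2 < t\<^sup>2" using sq_lt t Fc by simp
    have "u\<^sup>2 \<le> 1" using u by (simp add: power_le_one)
    then have "(t\<^sup>2 - (F c)\<^sup>2) * u\<^sup>2 \<le> t\<^sup>2 - (F c)\<^sup>2" using a by (simp add: mult_left_le)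
    moreover have "0 \<le> (t\<^sup>2 - (F c)\<^sup>2) * u\<^sup>2" using a by simp
    ultimately have "(F c)\<^sup>2 \<le> t\<^sup>2 - (t\<^sup>2 - (F c)\<^sup>2) * u\<^sup>2" "t\<^sup>2 - (t\<^sup>2 - (F c)\<^sup>2) * u\<^sup>2 \<le> t\<^sup>2"
      by linarith+
    then have "sqrt ((F c)\<^sup>2) \<le> Y p" "Y p \<le> sqrt (t\<^sup>2)" unfolding Y_def tu fst_conv snd_conv
      by (metis real_sqrt_le_mono)+
    moreover have "sqrt (t\<^sup>2) = t" "sqrt ((F c)\<^sup>2) = F c" using t0 Fc by auto
    ultimately show ?thesis using t by auto
  qed
  have Ycont: "continuous_on ({F c<..<F d} \<times> {0..1}) Y"
    unfolding Y_def by (intro continuous_intros)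
  have HY: "continuous_on ({F c<..<F d} \<times> {0..1}) (\<lambda>p. H (Y p))"
    using Yr by (intro continuous_on_compose2[OF Hcont Ycont]) auto
  have Ypos: "0 < Y p" if "p \<in> {F c<..<F d} \<times> {0..1}" for p
    using Yr[OF that] Fc by auto
  have "continuous_on ({F c<..<F d} \<times> {0..1})
     (\<lambda>p. fst p * sqrt ((fst p)\<^sup>2 - (F c)\<^sup>2) / (Y p * H (Y p)))"
  proof -
    have nz: "\<forall>p\<in>{F c<..<F d} \<times> {0..1}. Y p * H (Y p) \<noteq> 0"
      using Ypos Hpos Yr by (metis less_irrefl mult_pos_pos)
    show ?thesis by (intro continuous_intros Ycont HY nz)
  qed
  moreover have "(\<lambda>(t, u). fU t u) = (\<lambda>p. fst p * sqrt ((fst p)\<^sup>2 - (F c)\<^sup>2) / (Y p * H (Y p)))"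
    by (auto simp: fU_def Y_def fun_eq_iff)
  ultimately show ?thesis by simp
qed

lemma U_cont: "continuous_on {F c<..<F d} (\<lambda>t. integral {0..1} (fU t))"
  using integral_continuous_on_param[of "{F c<..<F d}" 0 1 fU] fU_cont by simp

lemma U_has_integral:
  assumes t: "t \<in> {F c<..<F d}"
  shows "((\<lambda>x. t / sqrt (t\<^sup>2 - (F x)\<^sup>2)) has_integral integral {0..1} (fU t)) {c..B t}"
proof -
  have tc: "t \<in> {F c..F d}" using t by auto
  have t0: "0 < t" using t Fc by auto
  define Q where "Q = sqrt (t\<^sup>2 - (F c)\<^sup>2)"
  have a: "(F c)\<^sup>2 < t\<^sup>2" using sq_lt t Fc by simp
  then have Q: "0 < Q" "Q\<^sup>2 = t\<^sup>2 - (F c)\<^sup>2" unfolding Q_def by auto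
  define S where "S = {c<..<B t}"
  have Sx: "x \<in> {c..d}" "F x < t" "F c < F x" if "x \<in> S" for x
  proof -
    show x: "x \<in> {c..d}" using that Bopen[OF t] unfolding S_def by auto
    show "F x < t" using Bless_iff[OF tc x] that unfolding S_def by auto
    show "F c < F x" using Fless_iff[OF _ x, of c] that cd unfolding S_def by auto
  qed
  define g where "g x = sqrt (t\<^sup>2 - (F x)\<^sup>2) / Q" for x
  define g' where "g' x = - (F x * F' x) / (sqrt (t\<^sup>2 - (F x)\<^sup>2) * Q)" for x
  have W: "0 < t\<^sup>2 - (F x)\<^sup>2" if "x \<in> S" for x
    using sq_lt[of "F x" t] Sx[OF that] Fpos[OF Sx(1)[OF that]] by simp
  have gder: "(g has_real_derivative g' x) (at x within S)" if x: "x \<in> S" for x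
  proof -
    have d1: "((\<lambda>x. t\<^sup>2 - (F x)\<^sup>2) has_real_derivative - (2 * F x * F' x)) (at x)"
      using der[OF Sx(1)[OF x]] by (auto intro!: derivative_eq_intros)
    have "((\<lambda>x. sqrt (t\<^sup>2 - (F x)\<^sup>2)) has_real_derivative inverse (sqrt (t\<^sup>2 - (F x)\<^sup>2)) / 2 * (- (2 * F x * F' x))) (at x)"
      by (rule DERIV_chain2[OF DERIV_real_sqrt[OF W[OF x]] d1])
    then have "(g has_real_derivative inverse (sqrt (t\<^sup>2 - (F x)\<^sup>2)) / 2 * (- (2 * F x * F' x)) / Q) (at x)"
      unfolding g_def by (rule DERIV_cdivide)
    moreover have "inverse (sqrt (t\<^sup>2 - (F x)\<^sup>2)) / 2 * (- (2 * F x * F' x)) / Q = g' x"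
      unfolding g'_def using Q W[OF x] by (simp add: field_simps)
    ultimately show ?thesis by (simp add: has_field_derivative_at_within)
  qed
  have ginj: "inj_on g S"
  proof (rule inj_onI)
    fix x y assume xy: "x \<in> S" "y \<in> S" "g x = g y"
    then have "sqrt (t\<^sup>2 - (F x)\<^sup>2) = sqrt (t\<^sup>2 - (F y)\<^sup>2)" unfolding g_def using Q by simp
    then have "(F x)\<^sup>2 = (F y)\<^sup>2" using W xy by simp
    then have "F x = F y" using Sx xy Fpos by (smt (verit) power2_eq_iff)
    then show "x = y" using Finj Sx xy by (meson inj_onD)
  qed
  have gimg: "g ` S = {0<..<1}"
  proof
    show "g ` S \<subseteq> {0<..<1}"
    proof
      fix u assume "u \<in> g ` S"
      then obtain x where x: "x \<in> S" "u = g x" by auto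
      have "(F c)\<^sup>2 < (F x)\<^sup>2" using sq_lt Sx[OF x(1)] Fc by simp
      then have "sqrt (t\<^sup>2 - (F x)\<^sup>2) < Q" unfolding Q_def by simp
      then show "u \<in> {0<..<1}" using x W[OF x(1)] Q by (simp add: g_def)
    qed
    show "{0<..<1} \<subseteq> g ` S"
    proof
      fix u :: real assume u: "u \<in> {0<..<1}"
      define y where "y = sqrt (t\<^sup>2 - Q\<^sup>2 * u\<^sup>2)"
      have "u\<^sup>2 < 1" using u by (simp add: power_less_one_iff abs_less_iff) 
      then have "Q\<^sup>2 * u\<^sup>2 < Q\<^sup>2" using Q(1) by (metis mult.right_neutral mult_strict_left_mono zero_less_power)
      moreover have "0 < Q\<^sup>2 * u\<^sup>2" using Q(1) u by (metis greaterThanLessThan_iff mult_pos_pos zero_less_power)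
      moreover have "Q\<^sup>2 \<le> t\<^sup>2" using Q(2) by simp
      ultimately have h: "Q\<^sup>2 * u\<^sup>2 \<le> t\<^sup>2" by linarith
      have y2: "y\<^sup>2 = t\<^sup>2 - Q\<^sup>2 * u\<^sup>2" unfolding y_def by (rule real_sqrt_pow2) (use h in linarith)
      have y1: "(F c)\<^sup>2 < y\<^sup>2" "y\<^sup>2 < t\<^sup>2" unfolding y2 using Q(2) \<open>Q\<^sup>2 * u\<^sup>2 < Q\<^sup>2\<close> \<open>0 < Q\<^sup>2 * u\<^sup>2\<close> by linarith+
      have y0: "0 \<le> y" unfolding y_def using h by simp
      have t00: "0 \<le> t" using t0 by simp
      have yt: "F c < y" "y < t"
        using power2_less_imp_less[OF y1(1) y0] power2_less_imp_less[OF y1(2) t00] by auto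
      have yr: "y \<in> {F c..F d}" using yt t by auto
      have "B y \<in> S" unfolding S_def using Bmono[OF yr tc] yt Bopen[of y] t by auto
      moreover have "g (B y) = u"
      proof -
        have "t\<^sup>2 - (F (B y))\<^sup>2 = Q\<^sup>2 * u\<^sup>2" using FB[OF yr] y2 by simp
        then show ?thesis unfolding g_def using Q u by (simp add: real_sqrt_mult Q_def)
      qed
      ultimately show "u \<in> g ` S" by (metis image_eqI)
    qed
  qed
  have fcont: "continuous_on {0..1} (fU t)"
  proof -
    have "continuous_on {0..1} (Pair t)" by (intro continuous_intros)
    moreover have "Pair t ` {0..1} \<subseteq> {F c<..<F d} \<times> {0..1}" using t by auto
    ultimately show ?thesis
      using continuous_on_compose2[OF fU_cont, of "{0..1}" "\<lambda>u. (t, u)"] by simp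
  qed
  have fabs: "fU t absolutely_integrable_on {0<..<1}"
    using absolutely_integrable_continuous_real[OF fcont] absolutely_integrable_on_Icc_iff_Ioo by blast
  have fint: "integral {0<..<1} (fU t) = integral {0..1} (fU t)"
  proof -
    have "(fU t has_integral integral {0..1} (fU t)) {0..1}"
      by (rule integrable_integral[OF integrable_continuous_real[OF fcont]])
    then have "(fU t has_integral integral {0..1} (fU t)) {0<..<1}"
      by (simp only: has_integral_Icc_iff_Ioo)
    then show ?thesis by (rule integral_unique)
  qed
  have Sleb: "S \<in> sets lebesgue" unfolding S_def by simp
  have cov: "(\<lambda>x. \<bar>g' x\<bar> * fU t (g x)) absolutely_integrable_on S \<and>
        integral S (\<lambda>x. \<bar>g' x\<bar> * fU t (g x)) = integral {0..1} (fU t)"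
    using has_absolute_integral_change_of_variables_1'[OF Sleb gder ginj, of "fU t" "integral {0..1} (fU t)"]
      gimg fabs fint by simp
  have eq: "\<bar>g' x\<bar> * fU t (g x) = t / sqrt (t\<^sup>2 - (F x)\<^sup>2)" if x: "x \<in> S" for x
  proof -
    have x1: "x \<in> {c..d}" using Sx[OF x] by simp
    have Fx: "0 < F x" using Fpos[OF x1] .
    have gx2: "(g x)\<^sup>2 = (t\<^sup>2 - (F x)\<^sup>2) / Q\<^sup>2" unfolding g_def using W[OF x] by (simp add: power_divide)
    have "t\<^sup>2 - (t\<^sup>2 - (F c)\<^sup>2) * (g x)\<^sup>2 = (F x)\<^sup>2" unfolding gx2 Q(2)[symmetric] using Q(1) by simp
    then have "sqrt (t\<^sup>2 - (t\<^sup>2 - (F c)\<^sup>2) * (g x)\<^sup>2) = F x" using Fx by simp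
    then have e1: "fU t (g x) = t * Q / (F x * F' x)" unfolding fU_def Q_def using HF[OF x1] by simp
    have e2: "\<bar>g' x\<bar> = F x * F' x / (sqrt (t\<^sup>2 - (F x)\<^sup>2) * Q)"
      unfolding g'_def using Fx F'pos[OF x1] W[OF x] Q by simp
    have "sqrt (t\<^sup>2 - (F x)\<^sup>2) > 0" using W[OF x] by simp
    then show ?thesis unfolding e1 e2 using Fx F'pos[OF x1] Q(1) by (simp add: field_simps)
  qed
  have "((\<lambda>x. \<bar>g' x\<bar> * fU t (g x)) has_integral integral {0..1} (fU t)) S"
    using cov by (metis absolutely_integrable_on_def has_integral_integrable_integral)
  then have "((\<lambda>x. t / sqrt (t\<^sup>2 - (F x)\<^sup>2)) has_integral integral {0..1} (fU t)) S"
    using eq by (metis (no_types, lifting) has_integral_cong)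
  then show ?thesis unfolding S_def by (simp add: has_integral_Icc_iff_Ioo)
qed

end

locale KS =
  fixes A :: "real \<Rightarrow> real" and Xm Xp x0 :: real
  assumes lt: "Xm < Xp"
    and nonneg: "\<And>x. 0 \<le> A x"
    and outside: "\<And>x. x \<notin> {Xm..Xp} \<Longrightarrow> A x = 0"
    and AXm: "A Xm = 0" and AXp: "A Xp = 0"
    and pos: "\<And>x. x \<in> {Xm<..<Xp} \<Longrightarrow> 0 < A x"
    and cont: "continuous_on UNIV A"
    and der: "\<And>x. x \<in> {Xm<..<Xp} \<Longrightarrow> (A has_real_derivative deriv A x) (at x)"
    and dcont: "continuous_on {Xm<..<Xp} (deriv A)"
    and maxx: "\<And>x. x \<noteq> x0 \<Longrightarrow> A x < A x0"
    and card2: "\<And>s. 0 < s \<Longrightarrow> s < A x0 \<Longrightarrow> card {x. A x = s} = 2"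
begin

abbreviation "M \<equiv> A x0"

lemma x0_in: "Xm < x0" "x0 < Xp"
proof -
  have "A x0 > 0" using maxx[of Xm] AXm by (cases "x0 = Xm") (use AXm maxx[of Xp] AXp lt in auto)
  then have "x0 \<in> {Xm..Xp}" using outside by force
  moreover have "x0 \<noteq> Xm" "x0 \<noteq> Xp" using \<open>A x0 > 0\<close> AXm AXp by auto
  ultimately show "Xm < x0" "x0 < Xp" by auto
qed

lemma M_pos: "0 < M"
  using maxx[of Xm] AXm x0_in by auto

lemma A_le_M: "A x \<le> M"
  using maxx[of x] by (cases "x = x0") auto

lemma contA: "continuous_on S A"
  using cont continuous_on_subset by blast

lemma IVT_up: "u \<le> v \<Longrightarrow> A u \<le> y \<Longrightarrow> y \<le> A v \<Longrightarrow> \<exists>x\<in>{u..v}. A x = y"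
  using IVT'[of A u y v] contA by auto

lemma IVT_down: "u \<le> v \<Longrightarrow> A v \<le> y \<Longrightarrow> y \<le> A u \<Longrightarrow> \<exists>x\<in>{u..v}. A x = y"
  using IVT2'[of A v y u] contA by auto

lemma level:
  assumes t: "0 < t" "t < M"
  obtains a b where "Xm < a" "a < x0" "x0 < b" "b < Xp" "A a = t" "A b = t" "{x. A x = t} = {a, b}"
proof -
  obtain a where a: "a \<in> {Xm..x0}" "A a = t" using IVT_up[of Xm x0 t] x0_in AXm t by auto
  obtain b where b: "b \<in> {x0..Xp}" "A b = t" using IVT_down[of x0 Xp t] x0_in AXp t by auto
  have a1: "a \<noteq> Xm" "a \<noteq> x0" using a t AXm by auto
  have b1: "b \<noteq> Xp" "b \<noteq> x0" using b t AXp by auto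
  have "card {x. A x = t} = 2" using card2 t by simp
  then have fin: "finite {x. A x = t}" by (metis card.infinite zero_neq_numeral)
  have sub: "{a, b} \<subseteq> {x. A x = t}" using a b by auto
  have "card {a, b} = 2" using a b a1 b1 by auto
  then have "{a, b} = {x. A x = t}"
    using card_subset_eq[OF fin sub] \<open>card {x. A x = t} = 2\<close> by simp
  then show ?thesis using that[of a b] a b a1 b1 by auto
qed

definition xm where "xm t = xminus A t"
definition xp where "xp t = xplus A t"

lemma level_xm:
  assumes t: "0 < t" "t < M"
  shows "Xm < xm t" "xm t < x0" "A (xm t) = t" "x0 < xp t" "xp t < Xp" "A (xp t) = t"
    "{x. A x = t} = {xm t, xp t}"
proof -
  obtain a b where ab: "Xm < a" "a < x0" "x0 < b" "b < Xp" "A a = t" "A b = t" "{x. A x = t} = {a, b}"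
    using level[OF t] by blast
  have "xm t = a" unfolding xm_def xminus_def ab(7) using ab by (auto simp: min_def)
  moreover have "xp t = b" unfolding xp_def xplus_def ab(7) using ab by (auto simp: max_def)
  ultimately show "Xm < xm t" "xm t < x0" "A (xm t) = t" "x0 < xp t" "xp t < Xp" "A (xp t) = t"
    "{x. A x = t} = {xm t, xp t}" using ab by auto
qed

lemma A_eq_iff: "0 < t \<Longrightarrow> t < M \<Longrightarrow> A x = t \<longleftrightarrow> x = xm t \<or> x = xp t"
  using level_xm(7) by blast

lemma A_gt_iff:
  assumes t: "0 < t" "t < M"
  shows "t < A x \<longleftrightarrow> xm t < x \<and> x < xp t"
proof
  note L = level_xm[OF t]
  assume x: "t < A x"
  have "x \<in> {Xm<..<Xp}"
  proof -
    have "x \<in> {Xm..Xp}" using x outside[of x] t by force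
    moreover have "x \<noteq> Xm" "x \<noteq> Xp" using x t AXm AXp by auto
    ultimately show ?thesis by auto
  qed
  show "xm t < x \<and> x < xp t"
  proof (rule ccontr)
    assume "\<not> (xm t < x \<and> x < xp t)"
    then consider "x \<le> xm t" | "xp t \<le> x" by linarith
    then show False
    proof cases
      case 1
      then have "x < xm t" using x L by (metis order_less_irrefl le_less)
      obtain y where "y \<in> {Xm..x}" "A y = t" using IVT_up[of Xm x t] AXm x t \<open>x \<in> {Xm<..<Xp}\<close> by auto
      then show False using A_eq_iff[OF t, of y] \<open>x < xm t\<close> L by auto
    next
      case 2
      then have "xp t < x" using x L by (metis order_less_irrefl le_less)
      obtain y where "y \<in> {x..Xp}" "A y = t" using IVT_down[of x Xp t] AXp x t \<open>x \<in> {Xm<..<Xp}\<close> by auto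
      then show False using A_eq_iff[OF t, of y] \<open>xp t < x\<close> L by auto
    qed
  qed
next
  note L = level_xm[OF t]
  assume x: "xm t < x \<and> x < xp t"
  show "t < A x"
  proof (rule ccontr)
    assume "\<not> t < A x"
    then have "A x < t" using A_eq_iff[OF t, of x] x by fastforce
    consider "x \<le> x0" | "x0 \<le> x" by linarith
    then show False
    proof cases
      case 1
      obtain y where "y \<in> {x..x0}" "A y = t" using IVT_up[of x x0 t] \<open>A x < t\<close> t 1 by auto
      then show False using A_eq_iff[OF t, of y] x L by auto
    next
      case 2
      obtain y where "y \<in> {x0..x}" "A y = t" using IVT_down[of x0 x t] \<open>A x < t\<close> t 2 by auto
      then show False using A_eq_iff[OF t, of y] x L by auto
    qed
  qed
qed

lemma A_lt_iff:
  assumes t: "0 < t" "t < M"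
  shows "A x < t \<longleftrightarrow> x < xm t \<or> xp t < x"
proof -
  have "xm t < xp t" using level_xm[OF t] by linarith
  moreover have "A x < t \<longleftrightarrow> \<not> t < A x \<and> A x \<noteq> t" by auto
  ultimately show ?thesis using A_gt_iff[OF t, of x] A_eq_iff[OF t, of x] by auto
qed

lemma inc: assumes "Xm \<le> y" "y < z" "z \<le> x0" shows "A y < A z"
proof (cases "z = x0")
  case True then show ?thesis using maxx assms by auto
next
  case False
  then have z: "z < x0" using assms by auto
  have "A z \<noteq> 0" using pos[of z] assms z x0_in by auto
  then have t: "0 < A z" "A z < M" using nonneg[of z] maxx[of z] False by auto
  have e: "xm (A z) = z" using A_eq_iff[OF t, of z] level_xm[OF t] z by auto
  have "y < xm (A z)" using e assms by simp
  then show ?thesis by (subst A_lt_iff[OF t]) simp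
qed

lemma dec: assumes "x0 \<le> y" "y < z" "z \<le> Xp" shows "A z < A y"
proof (cases "y = x0")
  case True then show ?thesis using maxx assms by auto
next
  case False
  then have y: "x0 < y" using assms by auto
  have "A y \<noteq> 0" using pos[of y] assms y x0_in by auto
  then have t: "0 < A y" "A y < M" using nonneg[of y] maxx[of y] False by auto
  have e: "xp (A y) = y" using A_eq_iff[OF t, of y] level_xm[OF t] y by auto
  have "xp (A y) < z" using e assms by simp
  then show ?thesis by (subst A_lt_iff[OF t]) simp
qed

end

lemma sard1:
  fixes g g' :: "real \<Rightarrow> real"
  assumes S: "S \<in> sets lebesgue"
    and d: "\<And>x. x \<in> S \<Longrightarrow> (g has_real_derivative g' x) (at x within S)"
    and inj: "inj_on g S" and C: "C \<subseteq> S" "\<And>x. x \<in> C \<Longrightarrow> g' x = 0"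
  shows "negligible (g ` C)"
proof -
  have z: "\<bar>g' x\<bar> * indicator (g ` C) (g x) = 0" if x: "x \<in> S" for x
  proof (cases "g x \<in> g ` C")
    case True
    then obtain z where "z \<in> C" "g x = g z" by auto
    then have "x = z" using inj x C by (meson inj_onD subsetD)
    then show ?thesis using C \<open>z \<in> C\<close> by simp
  qed simp
  have "((\<lambda>x. \<bar>g' x\<bar> * indicator (g ` C) (g x)) has_integral 0) S"
    using z by (intro has_integral_is_0) auto
  moreover have "((\<lambda>x. norm (\<bar>g' x\<bar> * indicator (g ` C) (g x))) has_integral 0) S"
    using z by (intro has_integral_is_0) auto
  ultimately have "(\<lambda>x. \<bar>g' x\<bar> * indicator (g ` C) (g x)) absolutely_integrable_on S \<and>
      integral S (\<lambda>x. \<bar>g' x\<bar> * indicator (g ` C) (g x)) = 0"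
    unfolding absolutely_integrable_on_def by (auto simp: integral_unique)
  then have r: "(indicator (g ` C) :: real \<Rightarrow> real) absolutely_integrable_on g ` S \<and> integral (g ` S) (indicator (g ` C) :: real \<Rightarrow> real) = 0"
  proof -
    have cv: "((\<lambda>x. \<bar>g' x\<bar> * f (g x)) absolutely_integrable_on S \<and> integral S (\<lambda>x. \<bar>g' x\<bar> * f (g x)) = b)
       \<longleftrightarrow> (f absolutely_integrable_on g ` S \<and> integral (g ` S) f = b)" for f :: "real \<Rightarrow> real" and b
      by (rule has_absolute_integral_change_of_variables_1'[OF S _ inj]) (rule d)
    show ?thesis using cv[of "indicator (g ` C)" 0] \<open>_ \<and> _\<close> by blast
  qed
  then have "((indicator (g ` C) :: real \<Rightarrow> real) has_integral 0) (g ` S)"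
    by (metis absolutely_integrable_on_def has_integral_integrable_integral)
  then have "((\<lambda>x. if x \<in> g ` S then (indicator (g ` C) x :: real) else 0) has_integral 0) UNIV"
    by (simp only: has_integral_restrict_UNIV)
  moreover have "(\<lambda>x. if x \<in> g ` S then (indicator (g ` C) x :: real) else 0) = indicator (g ` C)"
    using C by (auto simp: fun_eq_iff indicator_def)
  ultimately show ?thesis by (simp add: negligible_UNIV)
qed

lemma cont_pos_nbhd:
  fixes f :: "real \<Rightarrow> real"
  assumes c: "isCont f a" and p: "0 < f a"
  shows "\<exists>\<delta>>0. \<forall>y. \<bar>y - a\<bar> < \<delta> \<longrightarrow> 0 < f y"
proof -
  have "f \<midarrow>a\<rightarrow> f a" using c by (simp add: isCont_def)
  from LIM_D[OF this p] obtain s where s: "s > 0" "\<forall>x. x \<noteq> a \<and> norm (x - a) < s \<longrightarrow> norm (f x - f a) < f a"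
    by blast
  show ?thesis
  proof (intro exI conjI allI impI)
    show "0 < s" by fact
    fix y assume "\<bar>y - a\<bar> < s"
    then show "0 < f y" using s p by (cases "y = a") fastforce+
  qed
qed

context KS begin

definition Reg where "Reg = {t \<in> {0<..<M}. deriv A (xm t) \<noteq> 0 \<and> deriv A (xp t) \<noteq> 0}"

lemma Reg_sub: "Reg \<subseteq> {0<..<M}" unfolding Reg_def by auto

lemma negl_nonreg: "negligible ({0<..<M} - Reg)"
proof -
  define CL where "CL = {x \<in> {Xm<..<x0}. deriv A x = 0}"
  define CR where "CR = {x \<in> {x0<..<Xp}. deriv A x = 0}"
  have dL: "(A has_real_derivative deriv A x) (at x within {Xm<..<x0})" if "x \<in> {Xm<..<x0}" for x
    using der[of x] that x0_in by (auto intro: has_field_derivative_at_within)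
  have dR: "(A has_real_derivative deriv A x) (at x within {x0<..<Xp})" if "x \<in> {x0<..<Xp}" for x
    using der[of x] that x0_in by (auto intro: has_field_derivative_at_within)
  have iL: "inj_on A {Xm<..<x0}"
    by (rule inj_onI) (metis greaterThanLessThan_iff inc less_le linorder_neqE_linordered_idom order_less_irrefl)
  have iR: "inj_on A {x0<..<Xp}"
    by (rule inj_onI) (metis greaterThanLessThan_iff dec less_le linorder_neqE_linordered_idom order_less_irrefl)
  have nL: "negligible (A ` CL)"
    by (rule sard1[OF _ dL iL, of CL]) (auto simp: CL_def)
  have nR: "negligible (A ` CR)"
    by (rule sard1[OF _ dR iR, of CR]) (auto simp: CR_def)
  have "{0<..<M} - Reg \<subseteq> A ` CL \<union> A ` CR"
  proof
    fix t assume t: "t \<in> {0<..<M} - Reg"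
    then have t1: "0 < t" "t < M" by auto
    note L = level_xm[OF t1]
    from t have "deriv A (xm t) = 0 \<or> deriv A (xp t) = 0" unfolding Reg_def by auto
    then show "t \<in> A ` CL \<union> A ` CR"
    proof
      assume "deriv A (xm t) = 0"
      then have "xm t \<in> CL" unfolding CL_def using L by auto
      then show ?thesis using L by (metis UnI1 image_eqI)
    next
      assume "deriv A (xp t) = 0"
      then have "xp t \<in> CR" unfolding CR_def using L by auto
      then show ?thesis using L by (metis UnI2 image_eqI)
    qed
  qed
  then show ?thesis using nL nR negligible_Un negligible_subset by blast
qed

lemma isCont_dA: "x \<in> {Xm<..<Xp} \<Longrightarrow> isCont (deriv A) x"
  using dcont continuous_on_eq_continuous_at[of "{Xm<..<Xp}" "deriv A"] by auto

lemma regular_left: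
  assumes m: "m \<in> Reg"
  obtains c d where "Xm < c" "c < xm m" "xm m < d" "d < x0" "\<And>x. x \<in> {c..d} \<Longrightarrow> 0 < deriv A x"
proof -
  have m1: "0 < m" "m < M" using m Reg_sub by auto
  note L = level_xm[OF m1]
  define a where "a = xm m"
  have a: "Xm < a" "a < x0" using L unfolding a_def by auto
  have nz: "deriv A a \<noteq> 0" using m unfolding Reg_def a_def by auto
  have da: "(A has_real_derivative deriv A a) (at a)" using der[of a] a x0_in by auto
  have "0 < deriv A a"
  proof (rule ccontr)
    assume "\<not> 0 < deriv A a"
    then have "deriv A a < 0" using nz by linarith
    from DERIV_neg_dec_right[OF da this] obtain e where e: "e > 0" "\<forall>h>0. h < e \<longrightarrow> A (a + h) < A a" by blast
    define h where "h = min (e/2) (x0 - a)"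
    have h: "h > 0" "h < e" "a + h \<le> x0" using e a unfolding h_def by auto
    then have "A (a + h) < A a" using e by auto
    moreover have "A a < A (a + h)" using inc[of a "a + h"] a h by auto
    ultimately show False by simp
  qed
  from cont_pos_nbhd[OF isCont_dA this] a x0_in obtain \<delta> where \<delta>: "\<delta> > 0" "\<forall>y. \<bar>y - a\<bar> < \<delta> \<longrightarrow> 0 < deriv A y"
    by auto
  define \<eta> where "\<eta> = min (\<delta>/2) (min ((a - Xm)/2) ((x0 - a)/2))"
  have e1: "2*\<eta> \<le> \<delta>" "2*\<eta> \<le> a - Xm" "2*\<eta> \<le> x0 - a" "\<eta> > 0" using \<delta> a unfolding \<eta>_def by (auto simp: min_def)
  have \<eta>: "\<eta> > 0" "\<eta> < \<delta>" "a - \<eta> > Xm" "a + \<eta> < x0"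
    subgoal using e1 by linarith
    subgoal using e1 \<delta> by linarith
    subgoal using e1 a by linarith
    subgoal using e1 a by linarith
    done
  show ?thesis
  proof (rule that[of "a - \<eta>" "a + \<eta>"])
    fix x assume "x \<in> {a - \<eta>..a + \<eta>}"
    then have "\<bar>x - a\<bar> < \<delta>" using \<eta> by auto
    then show "0 < deriv A x" using \<delta> by auto
  qed (use \<eta> a_def in auto)
qed

lemma regular_right:
  assumes m: "m \<in> Reg"
  obtains c d where "x0 < c" "c < xp m" "xp m < d" "d < Xp" "\<And>x. x \<in> {c..d} \<Longrightarrow> deriv A x < 0"
proof -
  have m1: "0 < m" "m < M" using m Reg_sub by auto
  note L = level_xm[OF m1]
  define a where "a = xp m"
  have a: "x0 < a" "a < Xp" using L unfolding a_def by auto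
  have nz: "deriv A a \<noteq> 0" using m unfolding Reg_def a_def by auto
  have da: "(A has_real_derivative deriv A a) (at a)" using der[of a] a x0_in by auto
  have "0 < - deriv A a"
  proof (rule ccontr)
    assume "\<not> 0 < - deriv A a"
    then have "0 < deriv A a" using nz by linarith
    from DERIV_pos_inc_right[OF da this] obtain e where e: "e > 0" "\<forall>h>0. h < e \<longrightarrow> A a < A (a + h)" by blast
    define h where "h = min (e/2) (Xp - a)"
    have h: "h > 0" "h < e" "a + h \<le> Xp" using e a unfolding h_def by auto
    then have "A a < A (a + h)" using e by auto
    moreover have "A (a + h) < A a" using dec[of a "a + h"] a h by auto
    ultimately show False by simp
  qed
  have cn: "isCont (\<lambda>x. - deriv A x) a" using isCont_dA[of a] a x0_in by (auto intro: continuous_intros)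
  from cont_pos_nbhd[OF cn \<open>0 < - deriv A a\<close>] obtain \<delta> where \<delta>: "\<delta> > 0" "\<forall>y. \<bar>y - a\<bar> < \<delta> \<longrightarrow> 0 < - deriv A y"
    by auto
  define \<eta> where "\<eta> = min (\<delta>/2) (min ((a - x0)/2) ((Xp - a)/2))"
  have e1: "2*\<eta> \<le> \<delta>" "2*\<eta> \<le> a - x0" "2*\<eta> \<le> Xp - a" "\<eta> > 0" using \<delta> a unfolding \<eta>_def by (auto simp: min_def)
  have \<eta>: "\<eta> > 0" "\<eta> < \<delta>" "a - \<eta> > x0" "a + \<eta> < Xp"
    subgoal using e1 by linarith
    subgoal using e1 \<delta> by linarith
    subgoal using e1 a by linarith
    subgoal using e1 a by linarith
    done
  show ?thesis
  proof (rule that[of "a - \<eta>" "a + \<eta>"])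
    fix x assume "x \<in> {a - \<eta>..a + \<eta>}"
    then have "\<bar>x - a\<bar> < \<delta>" using \<eta> by auto
    then show "deriv A x < 0" using \<delta> by fastforce
  qed (use \<eta> a_def in auto)
qed

end

context KS begin

definition Pv where "Pv t = integral {xm t..xp t} (\<lambda>x. t / sqrt ((A x)\<^sup>2 - t\<^sup>2))"
definition Lv where "Lv t = integral {Xm..xm t} (\<lambda>x. t / sqrt (t\<^sup>2 - (A x)\<^sup>2))"
definition Rv where "Rv t = integral {xp t..Xp} (\<lambda>x. t / sqrt (t\<^sup>2 - (A x)\<^sup>2))"

lemma A_ge_mid:
  assumes "Xm \<le> d" "d \<le> x0" "x0 \<le> c'" "c' \<le> Xp" "x \<in> {d..c'}"
  shows "min (A d) (A c') \<le> A x"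
proof (cases "x \<le> x0")
  case True
  then have "A d \<le> A x" using inc[of d x] assms by (cases "d = x") (auto intro: less_imp_le)
  then show ?thesis by simp
next
  case False
  then have "A c' \<le> A x" using dec[of x c'] assms by (cases "x = c'") (auto intro: less_imp_le)
  then show ?thesis by simp
qed

lemma reg_nbhd:
  assumes m: "m \<in> Reg"
  shows "\<exists>N. open N \<and> m \<in> N \<and> N \<subseteq> {0<..<M} \<and>
    (\<forall>t\<in>N. ((\<lambda>x. t / sqrt ((A x)\<^sup>2 - t\<^sup>2)) has_integral Pv t) {xm t..xp t}
           \<and> ((\<lambda>x. t / sqrt (t\<^sup>2 - (A x)\<^sup>2)) has_integral Lv t) {Xm..xm t}
           \<and> ((\<lambda>x. t / sqrt (t\<^sup>2 - (A x)\<^sup>2)) has_integral Rv t) {xp t..Xp})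
    \<and> continuous_on N Pv \<and> continuous_on N Lv \<and> continuous_on N Rv"
proof -
  have m1: "0 < m" "m < M" using m Reg_sub by auto
  note Lm = level_xm[OF m1]
  obtain c d where cd: "Xm < c" "c < xm m" "xm m < d" "d < x0" "\<And>x. x \<in> {c..d} \<Longrightarrow> 0 < deriv A x"
    using regular_left[OF m] by blast
  obtain c' d' where cd': "x0 < c'" "c' < xp m" "xp m < d'" "d' < Xp" "\<And>x. x \<in> {c'..d'} \<Longrightarrow> deriv A x < 0"
    using regular_right[OF m] by blast
  interpret L: incbranch A "deriv A" c d
  proof
    show "c < d" using cd by simp
    show "(A has_real_derivative deriv A x) (at x)" if "x \<in> {c..d}" for x
      using der[of x] that cd x0_in by auto
    show "continuous_on {c..d} (deriv A)"
      using dcont by (rule continuous_on_subset) (use cd x0_in in auto)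
    show "0 < deriv A x" if "x \<in> {c..d}" for x using cd that by auto
    show "0 < A c" using pos[of c] cd x0_in by auto
  qed
  interpret R: incbranch "\<lambda>y. A (- y)" "\<lambda>y. - deriv A (- y)" "- d'" "- c'"
  proof
    show "- d' < - c'" using cd' by simp
    show "((\<lambda>y. A (- y)) has_real_derivative - deriv A (- y)) (at y)" if "y \<in> {- d'..- c'}" for y
      using der[of "- y"] that cd' x0_in by (auto simp: DERIV_mirror)
    have c1: "continuous_on {c'..d'} (deriv A)"
      using dcont by (rule continuous_on_subset) (use cd' x0_in in auto)
    have c2: "continuous_on {- d'..- c'} (uminus :: real \<Rightarrow> real)" by (rule continuous_on_minus[OF continuous_on_id])
    have c3: "uminus ` {- d'..- c'} \<subseteq> {c'..d'}" by auto
    have "continuous_on {- d'..- c'} (\<lambda>y. deriv A (- y))" by (rule continuous_on_compose2[OF c1 c2 c3])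
    then show "continuous_on {- d'..- c'} (\<lambda>y. - deriv A (- y))" by (rule continuous_on_minus)
    show "0 < - deriv A (- y)" if "y \<in> {- d'..- c'}" for y using cd' that by auto
    show "0 < A (- (- d'))" using pos[of d'] cd' x0_in by auto
  qed
  have Acd: "A c < m" "m < A d" using inc[of c "xm m"] inc[of "xm m" d] cd Lm by auto
  have Acd': "A d' < m" "m < A c'" using dec[of "xp m" d'] dec[of c' "xp m"] cd' Lm by auto
  define N where "N = {max (A c) (A d') <..< min (A d) (A c')}"
  have mN: "m \<in> N" unfolding N_def using Acd Acd' by auto
  have Ad_M: "A d < M" using maxx[of d] cd by auto
  have Ac0: "0 < A c" using pos[of c] cd x0_in by auto
  have NM: "N \<subseteq> {0<..<M}" unfolding N_def using Ad_M Ac0 by auto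
  have NL: "N \<subseteq> {A c<..<A d}" unfolding N_def by auto
  have NR: "N \<subseteq> {A d'<..<A c'}" unfolding N_def by auto
  have xmB: "L.B t = xm t" if t: "t \<in> N" for t
  proof -
    have t1: "0 < t" "t < M" using NM t by auto
    have "L.B t \<in> {c<..<d}" using L.Bopen NL t by auto
    moreover have "A (L.B t) = t" using L.FB NL t by auto
    ultimately show ?thesis using A_eq_iff[OF t1, of "L.B t"] level_xm[OF t1] cd by auto
  qed
  have xpB: "- R.B t = xp t" if t: "t \<in> N" for t
  proof -
    have t1: "0 < t" "t < M" using NM t by auto
    have "R.B t \<in> {- d'<..<- c'}" using R.Bopen NR t by auto
    moreover have "A (- R.B t) = t" using R.FB NR t by auto
    ultimately show ?thesis using A_eq_iff[OF t1, of "- R.B t"] level_xm[OF t1] cd' by auto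
  qed
  define \<mu> where "\<mu> = min (A d) (A c')"
  have Amid: "\<mu> \<le> A x" if "x \<in> {d..c'}" for x
    unfolding \<mu>_def using A_ge_mid[of d c' x] that cd cd' x0_in by auto
  have Nmu: "N \<subseteq> {0<..<\<mu>}" unfolding N_def \<mu>_def using Ac0 by auto
  have midc: "continuous_on ({0<..<\<mu>} \<times> {d..c'}) (\<lambda>(t, x). t / sqrt ((A x)\<^sup>2 - t\<^sup>2))"
  proof -
    have nz: "\<forall>p\<in>{0<..<\<mu>} \<times> {d..c'}. sqrt ((A (snd p))\<^sup>2 - (fst p)\<^sup>2) \<noteq> 0"
    proof
      fix p assume p: "p \<in> {0<..<\<mu>} \<times> {d..c'}"
      then have "fst p < A (snd p)" "0 < fst p" using Amid by force+
      then have "(fst p)\<^sup>2 < (A (snd p))\<^sup>2" by (simp add: power_strict_mono)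
      then show "sqrt ((A (snd p))\<^sup>2 - (fst p)\<^sup>2) \<noteq> 0" by simp
    qed
    have "continuous_on ({0<..<\<mu>} \<times> {d..c'}) (\<lambda>p. fst p / sqrt ((A (snd p))\<^sup>2 - (fst p)\<^sup>2))"
      by (intro continuous_intros continuous_on_compose2[OF cont] nz) auto
    then show ?thesis by (simp add: case_prod_unfold)
  qed
  have mid_int: "((\<lambda>x. t / sqrt ((A x)\<^sup>2 - t\<^sup>2)) has_integral integral {d..c'} (\<lambda>x. t / sqrt ((A x)\<^sup>2 - t\<^sup>2))) {d..c'}"
    if t: "t \<in> {0<..<\<mu>}" for t
  proof -
    have "continuous_on {d..c'} (\<lambda>x. t / sqrt ((A x)\<^sup>2 - t\<^sup>2))"
    proof -
      have "continuous_on {d..c'} (Pair t)" by (intro continuous_intros)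
      moreover have "Pair t ` {d..c'} \<subseteq> {0<..<\<mu>} \<times> {d..c'}" using t by auto
      ultimately show ?thesis
        using continuous_on_compose2[OF midc, of "{d..c'}" "\<lambda>x. (t, x)"] by simp
    qed
    then show ?thesis by (intro integrable_integral integrable_continuous_real)
  qed
  have mid_cont: "continuous_on {0<..<\<mu>} (\<lambda>t. integral {d..c'} (\<lambda>x. t / sqrt ((A x)\<^sup>2 - t\<^sup>2)))"
    using integral_continuous_on_param[of "{0<..<\<mu>}" d c' "\<lambda>t x. t / sqrt ((A x)\<^sup>2 - t\<^sup>2)"] midc by simp
  define PP where "PP t = integral {0..1} (L.fT t) + integral {d..c'} (\<lambda>x. t / sqrt ((A x)\<^sup>2 - t\<^sup>2))
      + integral {0..1} (R.fT t)" for t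
  have P_int: "((\<lambda>x. t / sqrt ((A x)\<^sup>2 - t\<^sup>2)) has_integral PP t) {xm t..xp t}" if t: "t \<in> N" for t
  proof -
    have i1: "((\<lambda>x. t / sqrt ((A x)\<^sup>2 - t\<^sup>2)) has_integral integral {0..1} (L.fT t)) {xm t..d}"
      using L.T_has_integral[of t] NL t xmB[OF t] by auto
    have "((\<lambda>y. t / sqrt ((A (- y))\<^sup>2 - t\<^sup>2)) has_integral integral {0..1} (R.fT t)) {R.B t..- c'}"
      using R.T_has_integral[of t] NR t by auto
    then have "((\<lambda>y. t / sqrt ((A (- y))\<^sup>2 - t\<^sup>2)) has_integral integral {0..1} (R.fT t)) {- xp t..- c'}"
      using xpB[OF t] by (metis minus_minus)
    then have i3: "((\<lambda>x. t / sqrt ((A x)\<^sup>2 - t\<^sup>2)) has_integral integral {0..1} (R.fT t)) {c'..xp t}"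
      using has_integral_reflect_real[of "\<lambda>x. t / sqrt ((A x)\<^sup>2 - t\<^sup>2)" "integral {0..1} (R.fT t)" "xp t" c']
      by simp
    have i2: "((\<lambda>x. t / sqrt ((A x)\<^sup>2 - t\<^sup>2)) has_integral integral {d..c'} (\<lambda>x. t / sqrt ((A x)\<^sup>2 - t\<^sup>2))) {d..c'}"
      using mid_int Nmu t by auto
    have o: "xm t \<le> d" "d \<le> c'" "c' \<le> xp t"
      using L.Bopen[of t] R.Bopen[of t] NL NR t xmB[OF t] xpB[OF t] cd cd' x0_in by force+
    show ?thesis unfolding PP_def
      by (intro has_integral_combine[OF _ _ has_integral_combine[OF o(1) o(2) i1 i2] i3])
        (use o in auto)
  qed

  have PP_cont: "continuous_on N PP"
  proof -
    have "continuous_on N (\<lambda>t. integral {0..1} (L.fT t))" using L.T_cont NL by (rule continuous_on_subset)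
    moreover have "continuous_on N (\<lambda>t. integral {0..1} (R.fT t))" using R.T_cont NR by (auto intro: continuous_on_subset)
    moreover have "continuous_on N (\<lambda>t. integral {d..c'} (\<lambda>x. t / sqrt ((A x)\<^sup>2 - t\<^sup>2)))"
      using mid_cont Nmu by (rule continuous_on_subset)
    ultimately show ?thesis unfolding PP_def by (intro continuous_intros)
  qed
  have outc: "continuous_on ({\<alpha><..<M} \<times> {u..v}) (\<lambda>(t, x). t / sqrt (t\<^sup>2 - (A x)\<^sup>2))"
    if le: "\<And>x. x \<in> {u..v} \<Longrightarrow> A x \<le> \<alpha>" and a0: "0 \<le> \<alpha>" for u v \<alpha>
  proof -
    have nz: "\<forall>p\<in>{\<alpha><..<M} \<times> {u..v}. sqrt ((fst p)\<^sup>2 - (A (snd p))\<^sup>2) \<noteq> 0"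
    proof
      fix p assume p: "p \<in> {\<alpha><..<M} \<times> {u..v}"
      then have "A (snd p) < fst p" using le by force
      then have "(A (snd p))\<^sup>2 < (fst p)\<^sup>2" using nonneg by (simp add: power_strict_mono)
      then show "sqrt ((fst p)\<^sup>2 - (A (snd p))\<^sup>2) \<noteq> 0" by simp
    qed
    have "continuous_on ({\<alpha><..<M} \<times> {u..v}) (\<lambda>p. fst p / sqrt ((fst p)\<^sup>2 - (A (snd p))\<^sup>2))"
      by (intro continuous_intros continuous_on_compose2[OF cont] nz) auto
    then show ?thesis by (simp add: case_prod_unfold)
  qed
  have out_int: "((\<lambda>x. t / sqrt (t\<^sup>2 - (A x)\<^sup>2)) has_integral integral {u..v} (\<lambda>x. t / sqrt (t\<^sup>2 - (A x)\<^sup>2))) {u..v}"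
    if le: "\<And>x. x \<in> {u..v} \<Longrightarrow> A x \<le> \<alpha>" and a0: "0 \<le> \<alpha>" and t: "t \<in> {\<alpha><..<M}" for u v \<alpha> t
  proof -
    have "continuous_on {u..v} (\<lambda>x. t / sqrt (t\<^sup>2 - (A x)\<^sup>2))"
    proof -
      have "continuous_on {u..v} (Pair t)" by (intro continuous_intros)
      moreover have "Pair t ` {u..v} \<subseteq> {\<alpha><..<M} \<times> {u..v}" using t by auto
      ultimately show ?thesis
        using continuous_on_compose2[OF outc[of u v \<alpha>, OF le a0], of "{u..v}" "\<lambda>x. (t, x)"] by simp
    qed
    then show ?thesis by (intro integrable_integral integrable_continuous_real)
  qed
  have out_cont: "continuous_on {\<alpha><..<M} (\<lambda>t. integral {u..v} (\<lambda>x. t / sqrt (t\<^sup>2 - (A x)\<^sup>2)))"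
    if le: "\<And>x. x \<in> {u..v} \<Longrightarrow> A x \<le> \<alpha>" and a0: "0 \<le> \<alpha>" for u v \<alpha>
    using integral_continuous_on_param[of "{\<alpha><..<M}" u v "\<lambda>t x. t / sqrt (t\<^sup>2 - (A x)\<^sup>2)"] outc[OF le a0] by simp
  have leL: "A x \<le> A c" if "x \<in> {Xm..c}" for x
    using inc[of x c] that cd by (cases "x = c") (auto intro: less_imp_le)
  have leR: "A x \<le> A d'" if "x \<in> {d'..Xp}" for x
    using dec[of d' x] that cd' x0_in by (cases "x = d'") (auto intro: less_imp_le)
  have Ac0': "0 \<le> A c" "0 \<le> A d'" using nonneg by auto
  have NL2: "N \<subseteq> {A c<..<M}" using NL NM by fastforce
  have NR2: "N \<subseteq> {A d'<..<M}" using NR NM by fastforce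
  define LL where "LL t = integral {Xm..c} (\<lambda>x. t / sqrt (t\<^sup>2 - (A x)\<^sup>2)) + integral {0..1} (L.fU t)" for t
  define RR where "RR t = integral {0..1} (R.fU t) + integral {d'..Xp} (\<lambda>x. t / sqrt (t\<^sup>2 - (A x)\<^sup>2))" for t
  have L_int: "((\<lambda>x. t / sqrt (t\<^sup>2 - (A x)\<^sup>2)) has_integral LL t) {Xm..xm t}" if t: "t \<in> N" for t
  proof -
    have i1: "((\<lambda>x. t / sqrt (t\<^sup>2 - (A x)\<^sup>2)) has_integral integral {Xm..c} (\<lambda>x. t / sqrt (t\<^sup>2 - (A x)\<^sup>2))) {Xm..c}"
      using out_int[OF leL Ac0'(1)] NL2 t by auto
    have i2: "((\<lambda>x. t / sqrt (t\<^sup>2 - (A x)\<^sup>2)) has_integral integral {0..1} (L.fU t)) {c..xm t}"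
      using L.U_has_integral[of t] NL t xmB[OF t] by auto
    have o: "Xm \<le> c" "c \<le> xm t" using L.Bopen[of t] NL t xmB[OF t] cd by force+
    show ?thesis unfolding LL_def by (rule has_integral_combine[OF o i1 i2])
  qed
  have R_int: "((\<lambda>x. t / sqrt (t\<^sup>2 - (A x)\<^sup>2)) has_integral RR t) {xp t..Xp}" if t: "t \<in> N" for t
  proof -
    have "((\<lambda>y. t / sqrt (t\<^sup>2 - (A (- y))\<^sup>2)) has_integral integral {0..1} (R.fU t)) {- d'..R.B t}"
      using R.U_has_integral[of t] NR t by auto
    then have "((\<lambda>y. t / sqrt (t\<^sup>2 - (A (- y))\<^sup>2)) has_integral integral {0..1} (R.fU t)) {- d'..- xp t}"
      using xpB[OF t] by (metis minus_minus)
    then have i1: "((\<lambda>x. t / sqrt (t\<^sup>2 - (A x)\<^sup>2)) has_integral integral {0..1} (R.fU t)) {xp t..d'}"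
      using has_integral_reflect_real[of "\<lambda>x. t / sqrt (t\<^sup>2 - (A x)\<^sup>2)" "integral {0..1} (R.fU t)" d' "xp t"]
      by simp
    have i2: "((\<lambda>x. t / sqrt (t\<^sup>2 - (A x)\<^sup>2)) has_integral integral {d'..Xp} (\<lambda>x. t / sqrt (t\<^sup>2 - (A x)\<^sup>2))) {d'..Xp}"
      using out_int[OF leR Ac0'(2)] NR2 t by auto
    have o: "xp t \<le> d'" "d' \<le> Xp" using R.Bopen[of t] NR t xpB[OF t] cd' by force+
    show ?thesis unfolding RR_def by (rule has_integral_combine[OF o i1 i2])
  qed
  have LL_cont: "continuous_on N LL"
  proof -
    have "continuous_on N (\<lambda>t. integral {0..1} (L.fU t))" using L.U_cont NL by (rule continuous_on_subset)
    moreover have "continuous_on N (\<lambda>t. integral {Xm..c} (\<lambda>x. t / sqrt (t\<^sup>2 - (A x)\<^sup>2)))"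
      using out_cont[OF leL Ac0'(1)] NL2 by (rule continuous_on_subset)
    ultimately show ?thesis unfolding LL_def by (intro continuous_intros)
  qed
  have RR_cont: "continuous_on N RR"
  proof -
    have "continuous_on N (\<lambda>t. integral {0..1} (R.fU t))" using R.U_cont NR by (auto intro: continuous_on_subset)
    moreover have "continuous_on N (\<lambda>t. integral {d'..Xp} (\<lambda>x. t / sqrt (t\<^sup>2 - (A x)\<^sup>2)))"
      using out_cont[OF leR Ac0'(2)] NR2 by (rule continuous_on_subset)
    ultimately show ?thesis unfolding RR_def by (intro continuous_intros)
  qed
  have eqP: "Pv t = PP t" if "t \<in> N" for t
    unfolding Pv_def using P_int[OF that] by (rule integral_unique)
  have eqL: "Lv t = LL t" if "t \<in> N" for t
    unfolding Lv_def using L_int[OF that] by (rule integral_unique)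
  have eqR: "Rv t = RR t" if "t \<in> N" for t
    unfolding Rv_def using R_int[OF that] by (rule integral_unique)
  show ?thesis
  proof (intro exI conjI ballI)
    show "open N" unfolding N_def by simp
    show "m \<in> N" by fact
    show "N \<subseteq> {0<..<M}" by fact
    fix t assume t: "t \<in> N"
    show "((\<lambda>x. t / sqrt ((A x)\<^sup>2 - t\<^sup>2)) has_integral Pv t) {xm t..xp t}" using P_int[OF t] eqP[OF t] by simp
    show "((\<lambda>x. t / sqrt (t\<^sup>2 - (A x)\<^sup>2)) has_integral Lv t) {Xm..xm t}" using L_int[OF t] eqL[OF t] by simp
    show "((\<lambda>x. t / sqrt (t\<^sup>2 - (A x)\<^sup>2)) has_integral Rv t) {xp t..Xp}" using R_int[OF t] eqR[OF t] by simp
  next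
    show "continuous_on N Pv" using PP_cont eqP by (metis continuous_on_cong)
    show "continuous_on N Lv" using LL_cont eqL by (metis continuous_on_cong)
    show "continuous_on N Rv" using RR_cont eqR by (metis continuous_on_cong)
  qed
qed
end

lemma hk_nn:
  fixes f :: "real \<Rightarrow> real"
  assumes "(f has_integral I) S" "\<And>x. x \<in> S \<Longrightarrow> 0 \<le> f x"
  shows "(\<integral>\<^sup>+x. ennreal (indicator S x * f x) \<partial>lborel) = ennreal I"
  using nn_integral_has_integral_lebesgue[OF assms(2) assms(1)] by simp

lemma nn_hk:
  fixes f :: "real \<Rightarrow> real"
  assumes f: "f \<in> borel_measurable borel" and S: "S \<in> sets borel"
    and nn: "\<And>x. x \<in> S \<Longrightarrow> 0 \<le> f x"
    and eq: "(\<integral>\<^sup>+x. ennreal (indicator S x * f x) \<partial>lborel) = ennreal I" and I: "0 \<le> I"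
  shows "(f has_integral I) S"
proof -
  have "((\<lambda>x. indicator S x * f x) has_integral I) UNIV"
    using nn_integral_has_integral[of "\<lambda>x. indicator S x * f x" I] f S nn eq I
    by (auto simp: indicator_def)
  moreover have "(\<lambda>x. indicator S x * f x) = (\<lambda>x. if x \<in> S then f x else 0)"
    by (auto simp: indicator_def fun_eq_iff)
  ultimately show ?thesis by (simp add: has_integral_restrict_UNIV)
qed

lemma fubini_lborel:
  fixes f :: "real \<Rightarrow> real \<Rightarrow> ennreal"
  assumes "(\<lambda>(x, t). f x t) \<in> borel_measurable (lborel \<Otimes>\<^sub>M lborel)"
  shows "(\<integral>\<^sup>+x. \<integral>\<^sup>+t. f x t \<partial>lborel \<partial>lborel) = (\<integral>\<^sup>+t. \<integral>\<^sup>+x. f x t \<partial>lborel \<partial>lborel)"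
proof -
  have ps: "pair_sigma_finite lborel lborel"
    by (intro pair_sigma_finite.intro) (simp_all add: lborel.sigma_finite_measure_axioms)
  show ?thesis using pair_sigma_finite.Fubini'[OF ps assms] by simp
qed

context KS begin

lemma A_meas[measurable]: "A \<in> borel_measurable borel"
  using borel_measurable_continuous_onI[OF cont] .

definition phi where "phi x t = (if t < A x then t / sqrt ((A x)\<^sup>2 - t\<^sup>2) else 0)"
definition psi where "psi x t = (if A x < t then t / sqrt (t\<^sup>2 - (A x)\<^sup>2) else 0)"

lemma phi_meas[measurable (raw)]:
  assumes [measurable]: "f \<in> borel_measurable N" "g \<in> borel_measurable N"
  shows "(\<lambda>p. phi (f p) (g p)) \<in> borel_measurable N"
  unfolding phi_def by measurable

lemma psi_meas[measurable (raw)]: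
  assumes [measurable]: "f \<in> borel_measurable N" "g \<in> borel_measurable N"
  shows "(\<lambda>p. psi (f p) (g p)) \<in> borel_measurable N"
  unfolding psi_def by measurable

lemma phi_nn: assumes "0 \<le> t" shows "0 \<le> phi x t"
proof (cases "t < A x")
  case True
  then have "t\<^sup>2 \<le> (A x)\<^sup>2" using assms by (simp add: power_mono)
  then show ?thesis using True assms unfolding phi_def by simp
qed (simp add: phi_def)

lemma psi_nn: assumes "0 \<le> t" shows "0 \<le> psi x t"
proof (cases "A x < t")
  case True
  then have "(A x)\<^sup>2 \<le> t\<^sup>2" using nonneg[of x] by (simp add: power_mono)
  then show ?thesis using True assms unfolding psi_def by simp
qed (simp add: psi_def)

lemma E1:
  assumes m: "0 \<le> m"
  shows "((\<lambda>t. phi x t) has_integral sqrt (max 0 ((A x)\<^sup>2 - m\<^sup>2))) {m..M}"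
proof (cases "m < A x")
  case True
  have i1: "((\<lambda>t. phi x t) has_integral sqrt ((A x)\<^sup>2 - m\<^sup>2)) {m..A x}"
  proof -
    have "((\<lambda>t. t / sqrt ((A x)\<^sup>2 - t\<^sup>2)) has_integral sqrt ((A x)\<^sup>2 - m\<^sup>2)) {m..A x}"
      using K2[OF m True] .
    moreover have "phi x t = t / sqrt ((A x)\<^sup>2 - t\<^sup>2)" if "t \<in> {m..A x}" for t
      using that unfolding phi_def by auto
    ultimately show ?thesis by (metis (no_types, lifting) has_integral_cong)
  qed
  have i2: "((\<lambda>t. phi x t) has_integral 0) {A x..M}"
    by (rule has_integral_is_0) (auto simp: phi_def)
  have "((\<lambda>t. phi x t) has_integral sqrt ((A x)\<^sup>2 - m\<^sup>2) + 0) {m..M}"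
    by (rule has_integral_combine[OF _ _ i1 i2]) (use True A_le_M in auto)
  moreover have "max 0 ((A x)\<^sup>2 - m\<^sup>2) = (A x)\<^sup>2 - m\<^sup>2"
    using True m by (simp add: power_mono)
  ultimately show ?thesis by simp
next
  case False
  have "((\<lambda>t. phi x t) has_integral 0) {m..M}"
    by (rule has_integral_is_0) (use False in \<open>auto simp: phi_def\<close>)
  moreover have "max 0 ((A x)\<^sup>2 - m\<^sup>2) = 0"
    using False nonneg[of x] by (simp add: power_mono)
  ultimately show ?thesis by simp
qed

lemma E2:
  assumes m: "0 < m"
  shows "((\<lambda>t. psi x t) has_integral sqrt (max 0 (m\<^sup>2 - (A x)\<^sup>2))) {0..m}"
proof (cases "A x < m")
  case True
  have i2: "((\<lambda>t. psi x t) has_integral sqrt (m\<^sup>2 - (A x)\<^sup>2)) {A x..m}"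
  proof -
    have "((\<lambda>t. t / sqrt (t\<^sup>2 - (A x)\<^sup>2)) has_integral sqrt (m\<^sup>2 - (A x)\<^sup>2)) {A x..m}"
      using K3[OF nonneg True] .
    moreover have "psi x t = t / sqrt (t\<^sup>2 - (A x)\<^sup>2)" if "t \<in> {A x..m}" for t
      using that unfolding psi_def by auto
    ultimately show ?thesis by (metis (no_types, lifting) has_integral_cong)
  qed
  have i1: "((\<lambda>t. psi x t) has_integral 0) {0..A x}"
    by (rule has_integral_is_0) (auto simp: psi_def)
  have "((\<lambda>t. psi x t) has_integral 0 + sqrt (m\<^sup>2 - (A x)\<^sup>2)) {0..m}"
    by (rule has_integral_combine[OF _ _ i1 i2]) (use True nonneg in auto)
  moreover have "max 0 (m\<^sup>2 - (A x)\<^sup>2) = m\<^sup>2 - (A x)\<^sup>2"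
    using True nonneg[of x] by (simp add: power_mono)
  ultimately show ?thesis by simp
next
  case False
  have "((\<lambda>t. psi x t) has_integral 0) {0..m}"
    by (rule has_integral_is_0) (use False in \<open>auto simp: psi_def\<close>)
  moreover have "max 0 (m\<^sup>2 - (A x)\<^sup>2) = 0"
    using False m by (simp add: power_mono)
  ultimately show ?thesis by simp
qed

lemma E3:
  assumes s: "0 \<le> s"
  shows "((\<lambda>m. phi x m / sqrt (m\<^sup>2 - s\<^sup>2)) has_integral (if s < A x then pi / 2 else 0)) {s..M}"
proof (cases "s < A x")
  case True
  have i1: "((\<lambda>m. phi x m / sqrt (m\<^sup>2 - s\<^sup>2)) has_integral pi / 2) {s..A x}"
  proof -
    have "((\<lambda>m. m / (sqrt (m\<^sup>2 - s\<^sup>2) * sqrt ((A x)\<^sup>2 - m\<^sup>2))) has_integral pi / 2) {s..A x}"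
      using K1[OF s True] .
    moreover have "phi x m / sqrt (m\<^sup>2 - s\<^sup>2) = m / (sqrt (m\<^sup>2 - s\<^sup>2) * sqrt ((A x)\<^sup>2 - m\<^sup>2))"
      if "m \<in> {s..A x}" for m
      using that unfolding phi_def by (auto simp: divide_divide_eq_left mult.commute)
    ultimately show ?thesis by (metis (no_types, lifting) has_integral_cong)
  qed
  have i2: "((\<lambda>m. phi x m / sqrt (m\<^sup>2 - s\<^sup>2)) has_integral 0) {A x..M}"
    by (rule has_integral_is_0) (auto simp: phi_def)
  have "((\<lambda>m. phi x m / sqrt (m\<^sup>2 - s\<^sup>2)) has_integral pi / 2 + 0) {s..M}"
    by (rule has_integral_combine[OF _ _ i1 i2]) (use True A_le_M in auto)
  then show ?thesis using True by simp
next
  case False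
  have "((\<lambda>m. phi x m / sqrt (m\<^sup>2 - s\<^sup>2)) has_integral 0) {s..M}"
    by (rule has_integral_is_0) (use False in \<open>auto simp: phi_def\<close>)
  then show ?thesis using False by simp
qed

lemma E4:
  assumes s: "0 < s"
  shows "((\<lambda>m. psi x m / sqrt (s\<^sup>2 - m\<^sup>2)) has_integral (if A x < s then pi / 2 else 0)) {0..s}"
proof (cases "A x < s")
  case True
  have i2: "((\<lambda>m. psi x m / sqrt (s\<^sup>2 - m\<^sup>2)) has_integral pi / 2) {A x..s}"
  proof -
    have "((\<lambda>m. m / (sqrt (m\<^sup>2 - (A x)\<^sup>2) * sqrt (s\<^sup>2 - m\<^sup>2))) has_integral pi / 2) {A x..s}"
      using K1[OF nonneg True] .
    moreover have "psi x m / sqrt (s\<^sup>2 - m\<^sup>2) = m / (sqrt (m\<^sup>2 - (A x)\<^sup>2) * sqrt (s\<^sup>2 - m\<^sup>2))"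
      if "m \<in> {A x..s}" for m
      using that unfolding psi_def by (auto simp: divide_divide_eq_left)
    ultimately show ?thesis by (metis (no_types, lifting) has_integral_cong)
  qed
  have i1: "((\<lambda>m. psi x m / sqrt (s\<^sup>2 - m\<^sup>2)) has_integral 0) {0..A x}"
    by (rule has_integral_is_0) (auto simp: psi_def)
  have "((\<lambda>m. psi x m / sqrt (s\<^sup>2 - m\<^sup>2)) has_integral 0 + pi / 2) {0..s}"
    by (rule has_integral_combine[OF _ _ i1 i2]) (use True nonneg in auto)
  then show ?thesis using True by simp
next
  case False
  have "((\<lambda>m. psi x m / sqrt (s\<^sup>2 - m\<^sup>2)) has_integral 0) {0..s}"
    by (rule has_integral_is_0) (use False in \<open>auto simp: psi_def\<close>)
  then show ?thesis using False by simp
qed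

definition PhiT where "PhiT t = (\<integral>\<^sup>+x. ennreal (phi x t) \<partial>lborel)"
definition phir where "phir t = enn2real (PhiT t)"

lemma PhiT_meas[measurable]: "PhiT \<in> borel_measurable borel"
  unfolding PhiT_def by measurable

lemma phir_meas[measurable]: "phir \<in> borel_measurable borel"
  unfolding phir_def by measurable

lemma T1:
  assumes m: "0 < m" "m < M"
  shows "(\<integral>\<^sup>+t. indicator {m..M} t * PhiT t \<partial>lborel) = ennreal (Phi A m)"
    and "(phir has_integral Phi A m) {m..M}"
proof -
  define hm where "hm x = sqrt (max 0 ((A x)\<^sup>2 - m\<^sup>2))" for x
  note L = level_xm[OF m]
  have in1: "hm x = sqrt ((A x)\<^sup>2 - m\<^sup>2)" if x: "x \<in> {xm m..xp m}" for x
  proof -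
    have "\<not> A x < m" using A_lt_iff[OF m, of x] x by auto
    then have "m\<^sup>2 \<le> (A x)\<^sup>2" using m by (simp add: power_mono)
    then show ?thesis unfolding hm_def by simp
  qed
  have out1: "hm x = 0" if x: "x \<notin> {xm m..xp m}" for x
  proof -
    have "\<not> m < A x" using A_gt_iff[OF m, of x] x by auto
    then have "(A x)\<^sup>2 \<le> m\<^sup>2" using nonneg[of x] by (simp add: power_mono)
    then show ?thesis unfolding hm_def by simp
  qed
  have "continuous_on {xm m..xp m} (\<lambda>x. sqrt ((A x)\<^sup>2 - m\<^sup>2))"
    by (intro continuous_intros contA)
  then have "((\<lambda>x. sqrt ((A x)\<^sup>2 - m\<^sup>2)) has_integral Phi A m) {xm m..xp m}"
    unfolding Phi_def xm_def[symmetric] xp_def[symmetric]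
    by (intro integrable_integral integrable_continuous_real)
  then have "(hm has_integral Phi A m) {xm m..xp m}"
    using in1 by (metis (no_types, lifting) has_integral_cong)
  then have hmi: "(hm has_integral Phi A m) UNIV"
    by (rule has_integral_on_superset) (use out1 in auto)
  have hm_nn: "0 \<le> hm x" for x unfolding hm_def by simp
  have Phi_nn: "0 \<le> Phi A m" using has_integral_nonneg[OF hmi] hm_nn by auto
  have b: "ennreal (Phi A m) = (\<integral>\<^sup>+x. ennreal (hm x) \<partial>lborel)"
    using hk_nn[OF hmi] hm_nn by simp
  have c: "ennreal (hm x) = (\<integral>\<^sup>+t. ennreal (indicator {m..M} t * phi x t) \<partial>lborel)" for x
    using hk_nn[OF E1[of m x]] m phi_nn[of _ x] unfolding hm_def by auto
  have d: "(\<integral>\<^sup>+x. \<integral>\<^sup>+t. ennreal (indicator {m..M} t * phi x t) \<partial>lborel \<partial>lborel)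
      = (\<integral>\<^sup>+t. \<integral>\<^sup>+x. ennreal (indicator {m..M} t * phi x t) \<partial>lborel \<partial>lborel)"
    by (rule fubini_lborel) measurable
  have e: "(\<integral>\<^sup>+x. ennreal (indicator {m..M} t * phi x t) \<partial>lborel) = indicator {m..M} t * PhiT t" for t
    by (cases "t \<in> {m..M}") (simp_all add: PhiT_def)
  have f: "(\<integral>\<^sup>+t. indicator {m..M} t * PhiT t \<partial>lborel) = ennreal (Phi A m)"
    using b c d e by simp
  then show "(\<integral>\<^sup>+t. indicator {m..M} t * PhiT t \<partial>lborel) = ennreal (Phi A m)" .
  have g: "AE t in lborel. indicator {m..M} t * PhiT t \<noteq> \<infinity>"
    by (rule nn_integral_PInf_AE) (simp_all add: f)
  have h: "(\<integral>\<^sup>+t. ennreal (indicator {m..M} t * phir t) \<partial>lborel) = (\<integral>\<^sup>+t. indicator {m..M} t * PhiT t \<partial>lborel)"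
  proof (rule nn_integral_cong_AE)
    show "AE t in lborel. ennreal (indicator {m..M} t * phir t) = indicator {m..M} t * PhiT t"
      using g
    proof (rule AE_mp, intro AE_I2 impI)
      fix t assume t: "indicator {m..M} t * PhiT t \<noteq> \<infinity>"
      show "ennreal (indicator {m..M} t * phir t) = indicator {m..M} t * PhiT t"
      proof (cases "t \<in> {m..M}")
        case True
        then have "PhiT t < top" using t by (simp add: top.not_eq_extremum)
        then show ?thesis using True by (simp add: phir_def ennreal_enn2real)
      qed simp
    qed
  qed
  show "(phir has_integral Phi A m) {m..M}"
    by (rule nn_hk) (use h f Phi_nn in \<open>simp_all add: phir_def enn2real_nonneg\<close>)
qed

lemma phir_eq:
  assumes t: "0 < t" "t < M" and P: "((\<lambda>x. t / sqrt ((A x)\<^sup>2 - t\<^sup>2)) has_integral P) {xm t..xp t}"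
  shows "PhiT t = ennreal P" "phir t = P"
proof -
  have eq: "phi x t = t / sqrt ((A x)\<^sup>2 - t\<^sup>2)" if x: "x \<in> {xm t..xp t}" for x
  proof (cases "t < A x")
    case False
    then have "A x = t" using A_lt_iff[OF t, of x] x by fastforce
    then show ?thesis by (simp add: phi_def)
  qed (simp add: phi_def)
  have h1: "((\<lambda>x. phi x t) has_integral P) {xm t..xp t}"
    using has_integral_cong[of "{xm t..xp t}" "\<lambda>x. phi x t" "\<lambda>x. t / sqrt ((A x)\<^sup>2 - t\<^sup>2)" P] P eq by blast
  have h2: "phi x t = 0" if "x \<notin> {xm t..xp t}" for x
  proof -
    have "\<not> t < A x" using A_gt_iff[OF t, of x] that by auto
    then show ?thesis by (simp add: phi_def)
  qed
  have hi: "((\<lambda>x. phi x t) has_integral P) UNIV"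
    by (rule has_integral_on_superset[OF h1 h2 subset_UNIV])
  have P0: "0 \<le> P" using has_integral_nonneg[OF hi] phi_nn t by auto
  have "(\<integral>\<^sup>+x. ennreal (phi x t) \<partial>lborel) = ennreal P"
    by (rule nn_integral_has_integral_lborel[OF _ _ hi]) (use phi_nn t in auto)
  then show "PhiT t = ennreal P" unfolding PhiT_def .
  then show "phir t = P" unfolding phir_def using P0 by simp
qed

definition LTg where "LTg a b t = (\<integral>\<^sup>+x. ennreal (indicator {a..b} x * psi x t) \<partial>lborel)"
definition lrg where "lrg a b t = enn2real (LTg a b t)"
definition Vg where "Vg a b m = integral {a..b} (\<lambda>x. sqrt (max 0 (m\<^sup>2 - (A x)\<^sup>2)))"

lemma LTg_meas[measurable]: "LTg a b \<in> borel_measurable borel"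
  unfolding LTg_def by measurable

lemma lrg_meas[measurable]: "lrg a b \<in> borel_measurable borel"
  unfolding lrg_def by measurable

lemma T2:
  assumes m: "0 < m" and ab: "a \<le> b"
  shows "(\<integral>\<^sup>+t. indicator {0..m} t * LTg a b t \<partial>lborel) = ennreal (Vg a b m)"
    and "(lrg a b has_integral Vg a b m) {0..m}"
proof -
  define hL where "hL x = sqrt (max 0 (m\<^sup>2 - (A x)\<^sup>2))" for x
  have "continuous_on {a..b} hL" unfolding hL_def by (intro continuous_intros contA)
  then have hi: "(hL has_integral Vg a b m) {a..b}"
    unfolding Vg_def hL_def[symmetric] by (intro integrable_integral integrable_continuous_real)
  have hL_nn: "0 \<le> hL x" for x unfolding hL_def by simp
  have V_nn: "0 \<le> Vg a b m" using has_integral_nonneg[OF hi] hL_nn by auto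
  have b: "ennreal (Vg a b m) = (\<integral>\<^sup>+x. ennreal (indicator {a..b} x * hL x) \<partial>lborel)"
    using hk_nn[OF hi] hL_nn by simp
  have c: "ennreal (indicator {a..b} x * hL x) = (\<integral>\<^sup>+t. ennreal (indicator {0..m} t * (indicator {a..b} x * psi x t)) \<partial>lborel)" for x
  proof (cases "x \<in> {a..b}")
    case True
    then show ?thesis using hk_nn[OF E2[OF m, of x]] psi_nn[of _ x] unfolding hL_def by auto
  qed simp
  have d: "(\<integral>\<^sup>+x. \<integral>\<^sup>+t. ennreal (indicator {0..m} t * (indicator {a..b} x * psi x t)) \<partial>lborel \<partial>lborel)
      = (\<integral>\<^sup>+t. \<integral>\<^sup>+x. ennreal (indicator {0..m} t * (indicator {a..b} x * psi x t)) \<partial>lborel \<partial>lborel)"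
    by (rule fubini_lborel) measurable
  have e: "(\<integral>\<^sup>+x. ennreal (indicator {0..m} t * (indicator {a..b} x * psi x t)) \<partial>lborel) = indicator {0..m} t * LTg a b t" for t
    by (cases "t \<in> {0..m}") (simp_all add: LTg_def)
  have f: "(\<integral>\<^sup>+t. indicator {0..m} t * LTg a b t \<partial>lborel) = ennreal (Vg a b m)"
    using b c d e by simp
  then show "(\<integral>\<^sup>+t. indicator {0..m} t * LTg a b t \<partial>lborel) = ennreal (Vg a b m)" .
  have g: "AE t in lborel. indicator {0..m} t * LTg a b t \<noteq> \<infinity>"
    by (rule nn_integral_PInf_AE) (simp_all add: f)
  have h: "(\<integral>\<^sup>+t. ennreal (indicator {0..m} t * lrg a b t) \<partial>lborel) = (\<integral>\<^sup>+t. indicator {0..m} t * LTg a b t \<partial>lborel)"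
  proof (rule nn_integral_cong_AE)
    show "AE t in lborel. ennreal (indicator {0..m} t * lrg a b t) = indicator {0..m} t * LTg a b t"
      using g
    proof (rule AE_mp, intro AE_I2 impI)
      fix t assume t: "indicator {0..m} t * LTg a b t \<noteq> \<infinity>"
      show "ennreal (indicator {0..m} t * lrg a b t) = indicator {0..m} t * LTg a b t"
      proof (cases "t \<in> {0..m}")
        case True
        then have "LTg a b t < top" using t by (simp add: top.not_eq_extremum)
        then show ?thesis using True by (simp add: lrg_def ennreal_enn2real)
      qed simp
    qed
  qed
  show "(lrg a b has_integral Vg a b m) {0..m}"
    by (rule nn_hk) (use h f V_nn in \<open>simp_all add: lrg_def enn2real_nonneg\<close>)
qed

lemma lr_eqL:
  assumes t: "0 < t" "t < M" and P: "((\<lambda>x. t / sqrt (t\<^sup>2 - (A x)\<^sup>2)) has_integral P) {Xm..xm t}"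
  shows "LTg Xm x0 t = ennreal P" "lrg Xm x0 t = P"
proof -
  note L = level_xm[OF t]
  have eq: "indicator {Xm..x0} x * psi x t = t / sqrt (t\<^sup>2 - (A x)\<^sup>2)" if x: "x \<in> {Xm..xm t}" for x
  proof (cases "A x < t")
    case False
    then have "A x = t" using A_gt_iff[OF t, of x] x L by fastforce
    then show ?thesis using x L by (simp add: psi_def)
  next
    case True
    then show ?thesis using x L by (simp add: psi_def)
  qed
  have h1: "((\<lambda>x. indicator {Xm..x0} x * psi x t) has_integral P) {Xm..xm t}"
    using has_integral_cong[of "{Xm..xm t}" "\<lambda>x. indicator {Xm..x0} x * psi x t" "\<lambda>x. t / sqrt (t\<^sup>2 - (A x)\<^sup>2)" P] P eq by blast
  have h2: "indicator {Xm..x0} x * psi x t = 0" if x: "x \<notin> {Xm..xm t}" for x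
  proof (cases "x \<in> {Xm..x0}")
    case True
    then have "xm t < x" "x < xp t" using x L by auto
    then have "\<not> A x < t" using A_gt_iff[OF t, of x] by auto
    then show ?thesis by (simp add: psi_def)
  qed simp
  have hi: "((\<lambda>x. indicator {Xm..x0} x * psi x t) has_integral P) UNIV"
    by (rule has_integral_on_superset[OF h1 h2 subset_UNIV])
  have nn: "0 \<le> indicator {Xm..x0} x * psi x t" for x using psi_nn[of t x] t by simp
  have P0: "0 \<le> P" using has_integral_nonneg[OF hi] nn by auto
  have "(\<integral>\<^sup>+x. ennreal (indicator {Xm..x0} x * psi x t) \<partial>lborel) = ennreal P"
    by (rule nn_integral_has_integral_lborel[OF _ _ hi]) (use nn in auto)
  then show "LTg Xm x0 t = ennreal P" unfolding LTg_def .
  then show "lrg Xm x0 t = P" unfolding lrg_def using P0 by simp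
qed

lemma lr_eqR:
  assumes t: "0 < t" "t < M" and P: "((\<lambda>x. t / sqrt (t\<^sup>2 - (A x)\<^sup>2)) has_integral P) {xp t..Xp}"
  shows "LTg x0 Xp t = ennreal P" "lrg x0 Xp t = P"
proof -
  note L = level_xm[OF t]
  have eq: "indicator {x0..Xp} x * psi x t = t / sqrt (t\<^sup>2 - (A x)\<^sup>2)" if x: "x \<in> {xp t..Xp}" for x
  proof (cases "A x < t")
    case False
    then have "A x = t" using A_gt_iff[OF t, of x] x L by fastforce
    then show ?thesis using x L by (simp add: psi_def)
  next
    case True
    then show ?thesis using x L by (simp add: psi_def)
  qed
  have h1: "((\<lambda>x. indicator {x0..Xp} x * psi x t) has_integral P) {xp t..Xp}"
    using has_integral_cong[of "{xp t..Xp}" "\<lambda>x. indicator {x0..Xp} x * psi x t" "\<lambda>x. t / sqrt (t\<^sup>2 - (A x)\<^sup>2)" P] P eq by blast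
  have h2: "indicator {x0..Xp} x * psi x t = 0" if x: "x \<notin> {xp t..Xp}" for x
  proof (cases "x \<in> {x0..Xp}")
    case True
    then have "xm t < x" "x < xp t" using x L by auto
    then have "\<not> A x < t" using A_gt_iff[OF t, of x] by auto
    then show ?thesis by (simp add: psi_def)
  qed simp
  have hi: "((\<lambda>x. indicator {x0..Xp} x * psi x t) has_integral P) UNIV"
    by (rule has_integral_on_superset[OF h1 h2 subset_UNIV])
  have nn: "0 \<le> indicator {x0..Xp} x * psi x t" for x using psi_nn[of t x] t by simp
  have P0: "0 \<le> P" using has_integral_nonneg[OF hi] nn by auto
  have "(\<integral>\<^sup>+x. ennreal (indicator {x0..Xp} x * psi x t) \<partial>lborel) = ennreal P"
    by (rule nn_integral_has_integral_lborel[OF _ _ hi]) (use nn in auto)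
  then show "LTg x0 Xp t = ennreal P" unfolding LTg_def .
  then show "lrg x0 Xp t = P" unfolding lrg_def using P0 by simp
qed

lemma sq_sub_nn: "0 \<le> s \<Longrightarrow> s \<le> m \<Longrightarrow> 0 \<le> m\<^sup>2 - (s::real)\<^sup>2"
  by (simp add: power_mono)

lemma T4P:
  assumes s: "0 < s" "s < M"
  shows "((\<lambda>m. phir m / sqrt (m\<^sup>2 - s\<^sup>2)) has_integral pi / 2 * (xp s - xm s)) {s..M}"
proof -
  note L = level_xm[OF s]
  have a: "(\<integral>\<^sup>+m. ennreal (indicator {s..M} m * (phi x m / sqrt (m\<^sup>2 - s\<^sup>2))) \<partial>lborel)
      = ennreal (if s < A x then pi / 2 else 0)" for x
  proof (rule hk_nn[OF E3])
    show "0 \<le> s" using s by simp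
    fix m assume "m \<in> {s..M}"
    then show "0 \<le> phi x m / sqrt (m\<^sup>2 - s\<^sup>2)" using phi_nn[of m x] s sq_sub_nn[of s m] by simp
  qed
  have bi: "((\<lambda>x. if s < A x then pi / 2 else 0) has_integral pi / 2 * (xp s - xm s)) UNIV"
  proof -
    have "((\<lambda>x. pi / 2) has_integral (xp s - xm s) * (pi / 2)) {xm s..xp s}"
      using has_integral_const_real[of "pi / 2" "xm s" "xp s"] L by simp
    then have "((\<lambda>x. pi / 2) has_integral pi / 2 * (xp s - xm s)) {xm s<..<xp s}"
      using L by (simp add: has_integral_Icc_iff_Ioo mult.commute)
    then have "((\<lambda>x. if x \<in> {xm s<..<xp s} then pi / 2 else 0) has_integral pi / 2 * (xp s - xm s)) UNIV"
      by (simp only: has_integral_restrict_UNIV)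
    moreover have "(\<lambda>x. if x \<in> {xm s<..<xp s} then pi / 2 else 0) = (\<lambda>x. if s < A x then pi / 2 else (0::real))"
      using A_gt_iff[OF s] by (auto simp: fun_eq_iff)
    ultimately show ?thesis by simp
  qed
  have b: "(\<integral>\<^sup>+x. ennreal (if s < A x then pi / 2 else 0) \<partial>lborel) = ennreal (pi / 2 * (xp s - xm s))"
    by (rule nn_integral_has_integral_lborel[OF _ _ bi]) auto
  have c: "(\<integral>\<^sup>+x. \<integral>\<^sup>+m. ennreal (indicator {s..M} m * (phi x m / sqrt (m\<^sup>2 - s\<^sup>2))) \<partial>lborel \<partial>lborel)
      = (\<integral>\<^sup>+m. \<integral>\<^sup>+x. ennreal (indicator {s..M} m * (phi x m / sqrt (m\<^sup>2 - s\<^sup>2))) \<partial>lborel \<partial>lborel)"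
    by (rule fubini_lborel) measurable
  have fin: "AE m in lborel. indicator {s..M} m * PhiT m \<noteq> \<infinity>"
    by (rule nn_integral_PInf_AE) (simp_all add: T1(1)[OF s])
  have d: "(\<integral>\<^sup>+m. ennreal (indicator {s..M} m * (phir m / sqrt (m\<^sup>2 - s\<^sup>2))) \<partial>lborel)
      = (\<integral>\<^sup>+m. \<integral>\<^sup>+x. ennreal (indicator {s..M} m * (phi x m / sqrt (m\<^sup>2 - s\<^sup>2))) \<partial>lborel \<partial>lborel)"
  proof (rule nn_integral_cong_AE)
    show "AE m in lborel. ennreal (indicator {s..M} m * (phir m / sqrt (m\<^sup>2 - s\<^sup>2)))
        = (\<integral>\<^sup>+x. ennreal (indicator {s..M} m * (phi x m / sqrt (m\<^sup>2 - s\<^sup>2))) \<partial>lborel)"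
      using fin
    proof (rule AE_mp, intro AE_I2 impI)
      fix m assume fm: "indicator {s..M} m * PhiT m \<noteq> \<infinity>"
      show "ennreal (indicator {s..M} m * (phir m / sqrt (m\<^sup>2 - s\<^sup>2)))
        = (\<integral>\<^sup>+x. ennreal (indicator {s..M} m * (phi x m / sqrt (m\<^sup>2 - s\<^sup>2))) \<partial>lborel)"
      proof (cases "m \<in> {s..M}")
        case True
        then have fin2: "PhiT m < top" using fm by (simp add: top.not_eq_extremum)
        have q: "0 \<le> 1 / sqrt (m\<^sup>2 - s\<^sup>2)" using True s sq_sub_nn[of s m] by simp
        have m0: "0 \<le> m" using True s by simp
        have "(\<integral>\<^sup>+x. ennreal (indicator {s..M} m * (phi x m / sqrt (m\<^sup>2 - s\<^sup>2))) \<partial>lborel)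
            = (\<integral>\<^sup>+x. ennreal (phi x m) * ennreal (1 / sqrt (m\<^sup>2 - s\<^sup>2)) \<partial>lborel)"
          using True q phi_nn[OF m0] by (intro nn_integral_cong) (simp add: ennreal_mult[symmetric] divide_inverse)
        also have "\<dots> = PhiT m * ennreal (1 / sqrt (m\<^sup>2 - s\<^sup>2))"
          unfolding PhiT_def by (rule nn_integral_multc) measurable
        also have "\<dots> = ennreal (phir m) * ennreal (1 / sqrt (m\<^sup>2 - s\<^sup>2))"
          using fin2 by (simp add: phir_def ennreal_enn2real)
        also have "\<dots> = ennreal (indicator {s..M} m * (phir m / sqrt (m\<^sup>2 - s\<^sup>2)))"
          using True q by (simp add: ennreal_mult[symmetric] divide_inverse phir_def enn2real_nonneg)
        finally show ?thesis by simp
      qed simp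
    qed
  qed
  have e: "(\<integral>\<^sup>+m. ennreal (indicator {s..M} m * (phir m / sqrt (m\<^sup>2 - s\<^sup>2))) \<partial>lborel) = ennreal (pi / 2 * (xp s - xm s))"
    using a b c d by simp
  show ?thesis
  proof (rule nn_hk[OF _ _ _ e])
    show "0 \<le> pi / 2 * (xp s - xm s)" using L by simp
    fix m assume "m \<in> {s..M}"
    then show "0 \<le> phir m / sqrt (m\<^sup>2 - s\<^sup>2)" using s sq_sub_nn[of s m] by (simp add: phir_def enn2real_nonneg)
  qed measurable
qed

lemma T4g:
  assumes s: "0 < s" "s < M" and ab: "a \<le> b"
    and V: "((\<lambda>x. indicator {a..b} x * (if A x < s then pi / 2 else 0)) has_integral V) UNIV"
  shows "((\<lambda>m. lrg a b m / sqrt (s\<^sup>2 - m\<^sup>2)) has_integral V) {0..s}"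
proof -
  have a: "(\<integral>\<^sup>+m. ennreal (indicator {0..s} m * (indicator {a..b} x * psi x m / sqrt (s\<^sup>2 - m\<^sup>2))) \<partial>lborel)
      = ennreal (indicator {a..b} x * (if A x < s then pi / 2 else 0))" for x
  proof (cases "x \<in> {a..b}")
    case True
    have "(\<integral>\<^sup>+m. ennreal (indicator {0..s} m * (psi x m / sqrt (s\<^sup>2 - m\<^sup>2))) \<partial>lborel)
      = ennreal (if A x < s then pi / 2 else 0)"
    proof (rule hk_nn[OF E4[OF s(1)]])
      fix m assume "m \<in> {0..s}"
      then show "0 \<le> psi x m / sqrt (s\<^sup>2 - m\<^sup>2)" using psi_nn[of m x] sq_sub_nn[of m s] by simp
    qed
    then show ?thesis using True by simp
  qed simp
  have V0: "0 \<le> V" using has_integral_nonneg[OF V] by (auto simp: indicator_def)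
  have b: "(\<integral>\<^sup>+x. ennreal (indicator {a..b} x * (if A x < s then pi / 2 else 0)) \<partial>lborel) = ennreal V"
    by (rule nn_integral_has_integral_lborel[OF _ _ V]) (auto simp: indicator_def)
  have c: "(\<integral>\<^sup>+x. \<integral>\<^sup>+m. ennreal (indicator {0..s} m * (indicator {a..b} x * psi x m / sqrt (s\<^sup>2 - m\<^sup>2))) \<partial>lborel \<partial>lborel)
      = (\<integral>\<^sup>+m. \<integral>\<^sup>+x. ennreal (indicator {0..s} m * (indicator {a..b} x * psi x m / sqrt (s\<^sup>2 - m\<^sup>2))) \<partial>lborel \<partial>lborel)"
    by (rule fubini_lborel) measurable
  have fin: "AE m in lborel. indicator {0..s} m * LTg a b m \<noteq> \<infinity>"
    by (rule nn_integral_PInf_AE) (simp_all add: T2(1)[OF s(1) ab])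
  have d: "(\<integral>\<^sup>+m. ennreal (indicator {0..s} m * (lrg a b m / sqrt (s\<^sup>2 - m\<^sup>2))) \<partial>lborel)
      = (\<integral>\<^sup>+m. \<integral>\<^sup>+x. ennreal (indicator {0..s} m * (indicator {a..b} x * psi x m / sqrt (s\<^sup>2 - m\<^sup>2))) \<partial>lborel \<partial>lborel)"
  proof (rule nn_integral_cong_AE)
    show "AE m in lborel. ennreal (indicator {0..s} m * (lrg a b m / sqrt (s\<^sup>2 - m\<^sup>2)))
        = (\<integral>\<^sup>+x. ennreal (indicator {0..s} m * (indicator {a..b} x * psi x m / sqrt (s\<^sup>2 - m\<^sup>2))) \<partial>lborel)"
      using fin
    proof (rule AE_mp, intro AE_I2 impI)
      fix m assume fm: "indicator {0..s} m * LTg a b m \<noteq> \<infinity>"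
      show "ennreal (indicator {0..s} m * (lrg a b m / sqrt (s\<^sup>2 - m\<^sup>2)))
        = (\<integral>\<^sup>+x. ennreal (indicator {0..s} m * (indicator {a..b} x * psi x m / sqrt (s\<^sup>2 - m\<^sup>2))) \<partial>lborel)"
      proof (cases "m \<in> {0..s}")
        case True
        then have fin2: "LTg a b m < top" using fm by (simp add: top.not_eq_extremum)
        have q: "0 \<le> 1 / sqrt (s\<^sup>2 - m\<^sup>2)" using True s sq_sub_nn[of m s] by simp
        have m0: "0 \<le> m" using True s by simp
        have "(\<integral>\<^sup>+x. ennreal (indicator {0..s} m * (indicator {a..b} x * psi x m / sqrt (s\<^sup>2 - m\<^sup>2))) \<partial>lborel)
            = (\<integral>\<^sup>+x. ennreal (indicator {a..b} x * psi x m) * ennreal (1 / sqrt (s\<^sup>2 - m\<^sup>2)) \<partial>lborel)"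
          using True q psi_nn[OF m0] by (intro nn_integral_cong) (simp add: ennreal_mult[symmetric] divide_inverse)
        also have "\<dots> = LTg a b m * ennreal (1 / sqrt (s\<^sup>2 - m\<^sup>2))"
          unfolding LTg_def by (rule nn_integral_multc) measurable
        also have "\<dots> = ennreal (lrg a b m) * ennreal (1 / sqrt (s\<^sup>2 - m\<^sup>2))"
          using fin2 by (simp add: lrg_def ennreal_enn2real)
        also have "\<dots> = ennreal (indicator {0..s} m * (lrg a b m / sqrt (s\<^sup>2 - m\<^sup>2)))"
          using True q by (simp add: ennreal_mult[symmetric] divide_inverse lrg_def enn2real_nonneg)
        finally show ?thesis by simp
      qed simp
    qed
  qed
  have e: "(\<integral>\<^sup>+m. ennreal (indicator {0..s} m * (lrg a b m / sqrt (s\<^sup>2 - m\<^sup>2))) \<partial>lborel) = ennreal V"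
    using a b c d by simp
  show ?thesis
  proof (rule nn_hk[OF _ _ _ e V0])
    fix m assume "m \<in> {0..s}"
    then show "0 \<le> lrg a b m / sqrt (s\<^sup>2 - m\<^sup>2)" using s sq_sub_nn[of m s] by (simp add: lrg_def enn2real_nonneg)
  qed measurable
qed

end

context KS begin

lemma V1:
  assumes s: "0 < s" "s < M"
  shows "((\<lambda>x. indicator {Xm..x0} x * (if A x < s then pi / 2 else 0)) has_integral pi / 2 * (xm s - Xm)) UNIV"
proof -
  note L = level_xm[OF s]
  have "((\<lambda>x. pi / 2) has_integral (xm s - Xm) * (pi / 2)) {Xm..xm s}"
    using has_integral_const_real[of "pi / 2" Xm "xm s"] L by simp
  then have fi: "((\<lambda>x. if x \<in> {Xm..xm s} then pi / 2 else 0) has_integral pi / 2 * (xm s - Xm)) UNIV"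
    by (simp only: has_integral_restrict_UNIV mult.commute)
  have eq: "indicator {Xm..x0} x * (if A x < s then pi / 2 else (0::real)) = (if x \<in> {Xm..xm s} then pi / 2 else 0)"
    if "x \<in> UNIV - {xm s}" for x
  proof -
    have "x \<noteq> xm s" using that by auto
    then show ?thesis using A_lt_iff[OF s, of x] L by (auto simp: indicator_def)
  qed
  show ?thesis by (rule has_integral_spike[OF negligible_sing eq fi])
qed

lemma V2:
  assumes s: "0 < s" "s < M"
  shows "((\<lambda>x. indicator {x0..Xp} x * (if A x < s then pi / 2 else 0)) has_integral pi / 2 * (Xp - xp s)) UNIV"
proof -
  note L = level_xm[OF s]
  have "((\<lambda>x. pi / 2) has_integral (Xp - xp s) * (pi / 2)) {xp s..Xp}"
    using has_integral_const_real[of "pi / 2" "xp s" Xp] L by simp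
  then have fi: "((\<lambda>x. if x \<in> {xp s..Xp} then pi / 2 else 0) has_integral pi / 2 * (Xp - xp s)) UNIV"
    by (simp only: has_integral_restrict_UNIV mult.commute)
  have eq: "indicator {x0..Xp} x * (if A x < s then pi / 2 else (0::real)) = (if x \<in> {xp s..Xp} then pi / 2 else 0)"
    if "x \<in> UNIV - {xp s}" for x
  proof -
    have "x \<noteq> xp s" using that by auto
    then show ?thesis using A_lt_iff[OF s, of x] L by (auto simp: indicator_def)
  qed
  show ?thesis by (rule has_integral_spike[OF negligible_sing eq fi])
qed

lemma Xi_decomp:
  assumes m: "0 < m" "m < M"
  shows "Xi A m = (Xm + Xp) * m + Vg Xm x0 m - Vg x0 Xp m"
proof -
  note L = level_xm[OF m]
  define f where "f x = sqrt (m\<^sup>2 - (A x)\<^sup>2) - m" for x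
  define h where "h x = sqrt (max 0 (m\<^sup>2 - (A x)\<^sup>2))" for x
  have hc: "continuous_on S h" for S unfolding h_def by (intro continuous_intros contA)
  have fc: "continuous_on S f" for S unfolding f_def by (intro continuous_intros contA)
  have hint: "(h has_integral integral {a..b} h) {a..b}" for a b
    by (intro integrable_integral integrable_continuous_real hc)
  have fint: "(f has_integral integral {a..b} f) {a..b}" for a b
    by (intro integrable_integral integrable_continuous_real fc)
  have fout: "f x = 0" if "A x = 0" for x unfolding f_def using that m by simp
  have hfL: "f x = h x - m" if "x \<in> {Xm..xm m}" for x
  proof -
    have "\<not> m < A x" using A_gt_iff[OF m, of x] that by auto
    then have "(A x)\<^sup>2 \<le> m\<^sup>2" using nonneg[of x] by (simp add: power_mono)
    then show ?thesis unfolding f_def h_def by simp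
  qed
  have h0L: "h x = 0" if "x \<in> {xm m..x0}" for x
  proof -
    have "\<not> A x < m" using A_lt_iff[OF m, of x] that L by auto
    then have "m\<^sup>2 \<le> (A x)\<^sup>2" using m by (simp add: power_mono)
    then show ?thesis unfolding h_def by simp
  qed
  have VL: "Vg Xm x0 m = integral {Xm..xm m} h"
  proof -
    have "(h has_integral 0) {xm m..x0}" using h0L by (intro has_integral_is_0) auto
    then have "(h has_integral integral {Xm..xm m} h + 0) {Xm..x0}"
      by (intro has_integral_combine[OF _ _ hint]) (use L in auto)
    then show ?thesis unfolding Vg_def h_def[symmetric] by (simp add: integral_unique)
  qed
  have iL: "(f has_integral integral {Xm..xm m} h - (xm m - Xm) * m) {Xm..xm m}"
  proof -
    have "((\<lambda>x. h x - m) has_integral integral {Xm..xm m} h - (xm m - Xm) * m) {Xm..xm m}"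
      using has_integral_diff[OF hint has_integral_const_real[of m Xm "xm m"]] L by simp
    then show ?thesis using has_integral_cong[of "{Xm..xm m}" f "\<lambda>x. h x - m"] hfL by blast
  qed
  have iL0: "(f has_integral 0) {..Xm}"
  proof (rule has_integral_is_0)
    fix x assume "x \<in> {..Xm}"
    then have "A x = 0" using outside[of x] AXm by (cases "x = Xm") auto
    then show "f x = 0" by (rule fout)
  qed
  have lefti: "(f has_integral integral {Xm..xm m} h - (xm m - Xm) * m) {..xm m}"
  proof -
    have "(f has_integral 0 + (integral {Xm..xm m} h - (xm m - Xm) * m)) ({..Xm} \<union> {Xm..xm m})"
      by (rule has_integral_Un[OF iL0 iL]) (use L in \<open>auto intro: negligible_subset[OF negligible_sing]\<close>)
    moreover have "{..Xm} \<union> {Xm..xm m} = {..xm m}" using L by auto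
    ultimately show ?thesis by simp
  qed
  have hfR: "f x = h x - m" if "x \<in> {xp m..Xp}" for x
  proof -
    have "\<not> m < A x" using A_gt_iff[OF m, of x] that by auto
    then have "(A x)\<^sup>2 \<le> m\<^sup>2" using nonneg[of x] by (simp add: power_mono)
    then show ?thesis unfolding f_def h_def by simp
  qed
  have h0R: "h x = 0" if "x \<in> {x0..xp m}" for x
  proof -
    have "\<not> A x < m" using A_lt_iff[OF m, of x] that L by auto
    then have "m\<^sup>2 \<le> (A x)\<^sup>2" using m by (simp add: power_mono)
    then show ?thesis unfolding h_def by simp
  qed
  have VR: "Vg x0 Xp m = integral {xp m..Xp} h"
  proof -
    have "(h has_integral 0) {x0..xp m}" using h0R by (intro has_integral_is_0) auto
    then have "(h has_integral 0 + integral {xp m..Xp} h) {x0..Xp}"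
      by (intro has_integral_combine[OF _ _ _ hint]) (use L in auto)
    then show ?thesis unfolding Vg_def h_def[symmetric] by (simp add: integral_unique)
  qed
  have iR: "(f has_integral integral {xp m..Xp} h - (Xp - xp m) * m) {xp m..Xp}"
  proof -
    have "((\<lambda>x. h x - m) has_integral integral {xp m..Xp} h - (Xp - xp m) * m) {xp m..Xp}"
      using has_integral_diff[OF hint has_integral_const_real[of m "xp m" Xp]] L by simp
    then show ?thesis using has_integral_cong[of "{xp m..Xp}" f "\<lambda>x. h x - m"] hfR by blast
  qed
  have iR0: "(f has_integral 0) {Xp..}"
  proof (rule has_integral_is_0)
    fix x assume "x \<in> {Xp..}"
    then have "A x = 0" using outside[of x] AXp by (cases "x = Xp") auto
    then show "f x = 0" by (rule fout)
  qed
  have righti: "(f has_integral integral {xp m..Xp} h - (Xp - xp m) * m) {xp m..}"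
  proof -
    have "(f has_integral (integral {xp m..Xp} h - (Xp - xp m) * m) + 0) ({xp m..Xp} \<union> {Xp..})"
      by (rule has_integral_Un[OF iR iR0]) (use L in \<open>auto intro: negligible_subset[OF negligible_sing]\<close>)
    moreover have "{xp m..Xp} \<union> {Xp..} = {xp m..}" using L by auto
    ultimately show ?thesis by simp
  qed
  have "Xi A m = (xp m + xm m) * m + integral {..xm m} f - integral {xp m..} f"
    unfolding Xi_def f_def xm_def xp_def by simp
  also have "\<dots> = (xp m + xm m) * m + (integral {Xm..xm m} h - (xm m - Xm) * m)
      - (integral {xp m..Xp} h - (Xp - xp m) * m)"
    using lefti righti by (simp add: integral_unique)
  also have "\<dots> = (Xm + Xp) * m + Vg Xm x0 m - Vg x0 Xp m"
    unfolding VL VR by (simp add: algebra_simps)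
  finally show ?thesis .
qed

lemma deriv_of_integral:
  fixes f :: "real \<Rightarrow> real"
  assumes f: "f integrable_on {a..b}" and m: "a < m" "m < b" and c: "isCont f m"
  shows "((\<lambda>u. integral {a..u} f) has_real_derivative f m) (at m)"
proof -
  have "((\<lambda>u. integral {a..u} f) has_vector_derivative f m) (at m within {a..b} - {})"
    by (rule integral_has_vector_derivative_continuous_at[OF f]) (use m c in \<open>auto intro: continuous_at_imp_continuous_at_within\<close>)
  then have "((\<lambda>u. integral {a..u} f) has_vector_derivative f m) (at m)"
    using at_within_Icc_at[OF m] by simp
  then show ?thesis by (simp add: has_real_derivative_iff_has_vector_derivative)
qed

lemma cont_at_reg:
  assumes m: "m \<in> Reg"
  shows "isCont phir m" "isCont (lrg Xm x0) m" "isCont (lrg x0 Xp) m"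
proof -
  obtain N where N: "open N" "m \<in> N" "N \<subseteq> {0<..<M}"
    and I: "\<forall>t\<in>N. ((\<lambda>x. t / sqrt ((A x)\<^sup>2 - t\<^sup>2)) has_integral Pv t) {xm t..xp t}
           \<and> ((\<lambda>x. t / sqrt (t\<^sup>2 - (A x)\<^sup>2)) has_integral Lv t) {Xm..xm t}
           \<and> ((\<lambda>x. t / sqrt (t\<^sup>2 - (A x)\<^sup>2)) has_integral Rv t) {xp t..Xp}"
    and C: "continuous_on N Pv" "continuous_on N Lv" "continuous_on N Rv"
    using reg_nbhd[OF m] by blast
  have t1: "0 < t" "t < M" if "t \<in> N" for t using N that by auto
  have e1: "phir t = Pv t" if "t \<in> N" for t using phir_eq(2)[OF t1[OF that]] I that by blast
  have e2: "lrg Xm x0 t = Lv t" if "t \<in> N" for t using lr_eqL(2)[OF t1[OF that]] I that by blast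
  have e3: "lrg x0 Xp t = Rv t" if "t \<in> N" for t using lr_eqR(2)[OF t1[OF that]] I that by blast
  have "continuous_on N phir" using C(1) e1 by (metis continuous_on_cong)
  then show "isCont phir m" using N continuous_on_eq_continuous_at by blast
  have "continuous_on N (lrg Xm x0)" using C(2) e2 by (metis continuous_on_cong)
  then show "isCont (lrg Xm x0) m" using N continuous_on_eq_continuous_at by blast
  have "continuous_on N (lrg x0 Xp)" using C(3) e3 by (metis continuous_on_cong)
  then show "isCont (lrg x0 Xp) m" using N continuous_on_eq_continuous_at by blast
qed

lemma D1:
  assumes m: "m \<in> Reg"
  shows "(Phi A has_real_derivative - phir m) (at m)"
proof -
  have m1: "0 < m" "m < M" using m Reg_sub by auto
  define m0 where "m0 = m / 2"
  have m0: "0 < m0" "m0 < m" using m1 unfolding m0_def by auto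
  have fi: "phir integrable_on {m0..M}" using T1(2)[of m0] m0 m1 by (auto intro: has_integral_integrable)
  have eq: "Phi A t = integral {m0..M} phir - integral {m0..t} phir" if t: "t \<in> {m0<..<M}" for t
  proof -
    have "Phi A t = integral {t..M} phir" using T1(2)[of t] t m0 by (simp add: integral_unique)
    moreover have "integral {m0..t} phir + integral {t..M} phir = integral {m0..M} phir"
      by (rule Henstock_Kurzweil_Integration.integral_combine[OF _ _ fi]) (use t in auto)
    ultimately show ?thesis by simp
  qed
  have "((\<lambda>u. integral {m0..u} phir) has_real_derivative phir m) (at m)"
    by (rule deriv_of_integral[OF fi m0(2) m1(2) cont_at_reg(1)[OF m]])
  then have "((\<lambda>u. integral {m0..M} phir - integral {m0..u} phir) has_real_derivative 0 - phir m) (at m)"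
    by (intro derivative_intros)
  then have "((\<lambda>u. integral {m0..M} phir - integral {m0..u} phir) has_real_derivative - phir m) (at m)" by simp
  then show ?thesis
    by (rule has_field_derivative_transform_within_open[of _ _ _ "{m0<..<M}"]) (use m0 m1 eq in auto)
qed

lemma D2:
  assumes m: "m \<in> Reg"
  shows "(Xi A has_real_derivative (Xm + Xp) + lrg Xm x0 m - lrg x0 Xp m) (at m)"
proof -
  have m1: "0 < m" "m < M" using m Reg_sub by auto
  define m1' where "m1' = (m + M) / 2"
  have mm: "m < m1'" "m1' < M" using m1 unfolding m1'_def by auto
  have fiL: "lrg Xm x0 integrable_on {0..m1'}" using T2(2)[of m1' Xm x0] mm m1 x0_in
    by (auto intro: has_integral_integrable)
  have fiR: "lrg x0 Xp integrable_on {0..m1'}" using T2(2)[of m1' x0 Xp] mm m1 x0_in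
    by (auto intro: has_integral_integrable)
  have eq: "Xi A t = (Xm + Xp) * t + integral {0..t} (lrg Xm x0) - integral {0..t} (lrg x0 Xp)"
    if t: "t \<in> {0<..<m1'}" for t
  proof -
    have t1: "0 < t" "t < M" using t mm by auto
    show ?thesis using Xi_decomp[OF t1] T2(2)[of t Xm x0] T2(2)[of t x0 Xp] t1 x0_in
      by (simp add: integral_unique)
  qed
  have dL: "((\<lambda>u. integral {0..u} (lrg Xm x0)) has_real_derivative lrg Xm x0 m) (at m)"
    by (rule deriv_of_integral[OF fiL m1(1) mm(1) cont_at_reg(2)[OF m]])
  have dR: "((\<lambda>u. integral {0..u} (lrg x0 Xp)) has_real_derivative lrg x0 Xp m) (at m)"
    by (rule deriv_of_integral[OF fiR m1(1) mm(1) cont_at_reg(3)[OF m]])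
  have "((\<lambda>u. (Xm + Xp) * u + integral {0..u} (lrg Xm x0) - integral {0..u} (lrg x0 Xp)) has_real_derivative
      (Xm + Xp) * 1 + lrg Xm x0 m - lrg x0 Xp m) (at m)"
    by (intro DERIV_diff DERIV_add dL dR DERIV_cmult[OF DERIV_ident])
  then have "((\<lambda>u. (Xm + Xp) * u + integral {0..u} (lrg Xm x0) - integral {0..u} (lrg x0 Xp)) has_real_derivative
      (Xm + Xp) + lrg Xm x0 m - lrg x0 Xp m) (at m)" by simp
  then show ?thesis
    by (rule has_field_derivative_transform_within_open[of _ _ _ "{0<..<m1'}"]) (use mm m1 eq in auto)
qed

lemma final:
  assumes s: "0 < s" "s < M"
  shows "(\<lambda>m. deriv (Xi A) m / sqrt (s\<^sup>2 - m\<^sup>2)) integrable_on {0..s}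
    \<and> (\<lambda>m. deriv (Phi A) m / sqrt (m\<^sup>2 - s\<^sup>2)) integrable_on {s..M}
    \<and> xplus A s = 1 / pi * integral {0..s} (\<lambda>m. deriv (Xi A) m / sqrt (s\<^sup>2 - m\<^sup>2))
          - 1 / pi * integral {s..M} (\<lambda>m. deriv (Phi A) m / sqrt (m\<^sup>2 - s\<^sup>2))
    \<and> xminus A s = 1 / pi * integral {0..s} (\<lambda>m. deriv (Xi A) m / sqrt (s\<^sup>2 - m\<^sup>2))
          + 1 / pi * integral {s..M} (\<lambda>m. deriv (Phi A) m / sqrt (m\<^sup>2 - s\<^sup>2))"
proof -
  note L = level_xm[OF s]
  define NR where "NR = {0<..<M} - Reg"
  have nNR: "negligible NR" unfolding NR_def by (rule negl_nonreg)
  have I2: "((\<lambda>m. deriv (Phi A) m / sqrt (m\<^sup>2 - s\<^sup>2)) has_integral - (pi / 2 * (xp s - xm s))) {s..M}"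
  proof (rule has_integral_spike[OF _ _ has_integral_neg[OF T4P[OF s]]])
    show "negligible (NR \<union> {M})" using nNR by simp
    fix m assume m: "m \<in> {s..M} - (NR \<union> {M})"
    then have "m \<in> Reg" using s unfolding NR_def by auto
    then have "deriv (Phi A) m = - phir m" by (rule DERIV_imp_deriv[OF D1])
    then show "deriv (Phi A) m / sqrt (m\<^sup>2 - s\<^sup>2) = - (phir m / sqrt (m\<^sup>2 - s\<^sup>2))" by simp
  qed
  have k0: "((\<lambda>m. (Xm + Xp) * (1 / sqrt (s\<^sup>2 - m\<^sup>2))) has_integral (Xm + Xp) * (pi / 2)) {0..s}"
    by (rule has_integral_mult_right[OF K0[OF s(1)]])
  have tL: "((\<lambda>m. lrg Xm x0 m / sqrt (s\<^sup>2 - m\<^sup>2)) has_integral pi / 2 * (xm s - Xm)) {0..s}"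
    by (rule T4g[OF s _ V1[OF s]]) (use x0_in in simp)
  have tR: "((\<lambda>m. lrg x0 Xp m / sqrt (s\<^sup>2 - m\<^sup>2)) has_integral pi / 2 * (Xp - xp s)) {0..s}"
    by (rule T4g[OF s _ V2[OF s]]) (use x0_in in simp)
  have sum: "((\<lambda>m. (Xm + Xp) * (1 / sqrt (s\<^sup>2 - m\<^sup>2)) + lrg Xm x0 m / sqrt (s\<^sup>2 - m\<^sup>2) - lrg x0 Xp m / sqrt (s\<^sup>2 - m\<^sup>2))
      has_integral (Xm + Xp) * (pi / 2) + pi / 2 * (xm s - Xm) - pi / 2 * (Xp - xp s)) {0..s}"
    by (rule has_integral_diff[OF has_integral_add[OF k0 tL] tR])
  have I1: "((\<lambda>m. deriv (Xi A) m / sqrt (s\<^sup>2 - m\<^sup>2)) has_integral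
      (Xm + Xp) * (pi / 2) + pi / 2 * (xm s - Xm) - pi / 2 * (Xp - xp s)) {0..s}"
  proof (rule has_integral_spike[OF _ _ sum])
    show "negligible (NR \<union> {0})" using nNR by simp
    fix m assume m: "m \<in> {0..s} - (NR \<union> {0})"
    then have "m \<in> Reg" using s unfolding NR_def by auto
    then have "deriv (Xi A) m = (Xm + Xp) + lrg Xm x0 m - lrg x0 Xp m" by (rule DERIV_imp_deriv[OF D2])
    then show "deriv (Xi A) m / sqrt (s\<^sup>2 - m\<^sup>2) = (Xm + Xp) * (1 / sqrt (s\<^sup>2 - m\<^sup>2))
        + lrg Xm x0 m / sqrt (s\<^sup>2 - m\<^sup>2) - lrg x0 Xp m / sqrt (s\<^sup>2 - m\<^sup>2)"
      by (simp add: diff_divide_distrib add_divide_distrib)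
  qed
  have v1: "integral {0..s} (\<lambda>m. deriv (Xi A) m / sqrt (s\<^sup>2 - m\<^sup>2)) = pi / 2 * (xm s + xp s)"
    using integral_unique[OF I1] by (simp add: field_simps)
  have v2: "integral {s..M} (\<lambda>m. deriv (Phi A) m / sqrt (m\<^sup>2 - s\<^sup>2)) = - (pi / 2 * (xp s - xm s))"
    using integral_unique[OF I2] .
  have p: "pi \<noteq> 0" by simp
  show ?thesis
    unfolding v1 v2 xp_def[symmetric] xm_def[symmetric]
    using has_integral_integrable[OF I1] has_integral_integrable[OF I2] p
    by (simp add: field_simps)
qed

end

lemma KS_of_semicircular:
  assumes "semicircular_KS A Xm Xp"
  obtains x0 where "KS A Xm Xp x0" "Amax A = A x0"
proof -
  from assms[unfolded semicircular_KS_def] have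
    lt: "Xm < Xp" and nn: "\<forall>x. A x \<ge> 0" and out: "\<forall>x. x \<notin> {Xm..Xp} \<longrightarrow> A x = 0"
    and uc: "\<exists>u c. c > 0 \<and> (\<forall>x\<in>{Xm..Xp}. A x = u x * sqrt ((Xp - x) * (x - Xm)) \<and> u x \<ge> c) \<and>
        (\<exists>g U. open U \<and> complex_of_real ` {Xm..Xp} \<subseteq> U \<and> g holomorphic_on U \<and>
           (\<forall>x\<in>{Xm..Xp}. g (complex_of_real x) = complex_of_real (u x)))"
    and cont: "continuous_on UNIV A"
    and d: "\<forall>x\<in>{Xm<..<Xp}. A differentiable (at x) \<and> deriv A differentiable (at x)"
    and dc: "continuous_on {Xm<..<Xp} (deriv (deriv A))"
    and mx: "\<exists>x0. (\<forall>x. x \<noteq> x0 \<longrightarrow> A x < A x0) \<and> deriv (deriv A) x0 < 0"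
    and c2: "\<forall>s. 0 < s \<and> s < Amax A \<longrightarrow> card {x. A x = s} = 2"
    by blast+
  obtain u c where c: "c > 0" and uA: "\<forall>x\<in>{Xm..Xp}. A x = u x * sqrt ((Xp - x) * (x - Xm)) \<and> u x \<ge> c"
    using uc by blast
  obtain x0 where x0: "\<forall>x. x \<noteq> x0 \<longrightarrow> A x < A x0" using mx by blast
  have am: "Amax A = A x0"
    unfolding Amax_def
  proof (rule cSup_eq_maximum)
    show "A x0 \<in> range A" by simp
    fix y assume "y \<in> range A"
    then obtain z where z: "y = A z" by auto
    show "y \<le> A x0" using x0 z by (cases "z = x0") (auto intro: less_imp_le)
  qed
  have "KS A Xm Xp x0"
  proof
    show "Xm < Xp" by fact
    show "0 \<le> A x" for x using nn by simp
    show "x \<notin> {Xm..Xp} \<Longrightarrow> A x = 0" for x using out by simp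
    show "A Xm = 0" using uA lt by simp
    show "A Xp = 0" using uA lt by simp
    show "0 < A x" if "x \<in> {Xm<..<Xp}" for x
    proof -
      have "0 < (Xp - x) * (x - Xm)" using that by simp
      moreover have "u x \<ge> c" "A x = u x * sqrt ((Xp - x) * (x - Xm))" using uA that by auto
      ultimately show ?thesis using c by simp
    qed
    show "continuous_on UNIV A" by fact
    show "(A has_real_derivative deriv A x) (at x)" if "x \<in> {Xm<..<Xp}" for x
      using d that by (simp add: DERIV_deriv_iff_real_differentiable)
    show "continuous_on {Xm<..<Xp} (deriv A)"
      using d by (intro continuous_at_imp_continuous_on) (auto intro: differentiable_imp_continuous_within)
    show "x \<noteq> x0 \<Longrightarrow> A x < A x0" for x using x0 by simp
    show "card {x. A x = s} = 2" if "0 < s" "s < A x0" for s using c2 that am by simp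
  qed
  then show ?thesis using that am by blast
qed

theorem proposition3:
  fixes A :: "real \<Rightarrow> real" and Xm Xp s :: real
  assumes "semicircular_KS A Xm Xp"
    and "0 < s" and "s < Amax A"
  shows "(\<lambda>m. deriv (Xi A) m / sqrt (s\<^sup>2 - m\<^sup>2)) integrable_on {0..s}
    \<and> (\<lambda>m. deriv (Phi A) m / sqrt (m\<^sup>2 - s\<^sup>2)) integrable_on {s..Amax A}
    \<and> xplus A s = 1 / pi * integral {0..s} (\<lambda>m. deriv (Xi A) m / sqrt (s\<^sup>2 - m\<^sup>2))
          - 1 / pi * integral {s..Amax A} (\<lambda>m. deriv (Phi A) m / sqrt (m\<^sup>2 - s\<^sup>2))
    \<and> xminus A s = 1 / pi * integral {0..s} (\<lambda>m. deriv (Xi A) m / sqrt (s\<^sup>2 - m\<^sup>2))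
          + 1 / pi * integral {s..Amax A} (\<lambda>m. deriv (Phi A) m / sqrt (m\<^sup>2 - s\<^sup>2))"
proof -
  obtain x0 where K: "KS A Xm Xp x0" and am: "Amax A = A x0"
    using KS_of_semicircular[OF assms(1)] by blast
  show ?thesis using KS.final[OF K, of s] assms(2,3) am by simp
qed

end
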